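(* Let $\Lambda=\Lambda_A\oplus\Lambda_B$, with $\Lambda_A=\mathrm{diag}(\lambda_x)_{x\in\mathsf X}$ and $\Lambda_B=\mathrm{diag}(\lambda_y)_{y\in\mathsf Y}$, be an optimal solution of the dual SDP of an XOR game with game matrix $\Phi$ and optimal quantum bias $\xi_q$. Assume $\lambda_x>0$ for all $x\in\mathsf X$, and put $F=\Lambda_A^{-1}\Phi$, i.e. $F_{xy}=\lambda_x^{-1}\Phi_{xy}$. Then for every quantum strategy $(\{A_x\},\{B_y\})$ the following operator identity holds: $$\xi_q\mathbb 1-\mathcal B_g=\sum_{x\in\mathsf X}\frac{\lambda_x}{2}\Big(A_x-\sum_{y}F_{xy}B_y\Big)^2+P(\{B_y\}_y),$$ where $$P(\{B_y\}_y)=\frac12\Big(\xi_q\mathbb 1-\sum_{x\in\mathsf X}\frac1{\lambda_x}\sum_{y,y'}\Phi_{xy}\Phi_{xy'}B_yB_{y'}\Big)$$ is a polynomial in Bob's observables only, and $P(\{B_y\}_y)\succeq 0$ for every choice of Hermitian $B_y$ with $B_y^2=\mathbb 1$.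
   Context: An XOR game consists of finite question sets $\mathsf X,\mathsf Y$, a probability distribution $q$ on $\mathsf X\times\mathsf Y$, and a function $f:\mathsf X\times\mathsf Y\to\{0,1\}$; the players win on questions $(x,y)$ with answers $a,b\in\{0,1\}$ iff $a\oplus b=f(x,y)$. Its game matrix is the real $|\mathsf X|\times|\mathsf Y|$ matrix $\Phi$ with entries $\Phi_{xy}=q(x,y)(-1)^{f(x,y)}$. A quantum strategy consists of a state $|\psi\rangle\in\mathcal H_A\otimes\mathcal H_B$ and Hermitian observables $A_x$ on $\mathcal H_A$, $B_y$ on $\mathcal H_B$ with $A_x^2=\mathbb 1$, $B_y^2=\mathbb 1$ (we write $A_x$ for $A_x\otimes\mathbb 1$ and $B_y$ for $\mathbb 1\otimes B_y$, so they commute). The game operator is $\mathcal B_g=\sum_{x,y}\Phi_{xy}A_x B_y$; the bias of the strategy is $\langle\psi|\mathcal B_g|\psi\rangle$, and the optimal quantum bias $\xi_q$ is the supremum of the bias over all quantum strategies (of any dimension). Let $\tilde\Phi=\frac12\begin{pmatrix}0&\Phi\\ \Phi^T&0\end{pmatrix}$. The dual SDP is: minimize $\mathrm{Tr}[\Lambda]/2$ over real diagonal $(|\mathsf X|+|\mathsf Y|)\times(|\mathsf X|+|\mathsf Y|)$ matrices $\Lambda$ subject to $\frac12\Lambda-\tilde\Phi\succeq0$; its optimal value equals $\xi_q$. *)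

theory Defs
  imports "Jordan_Normal_Form.Matrix"
begin

(* Finite-dimensional complex operators are represented as JNF matrices "complex mat";
   the dimension is a value, so strategies of arbitrary (finite) dimension can be quantified. *)

definition cinner :: "complex vec \<Rightarrow> complex vec \<Rightarrow> complex" where
  "cinner v w = (\<Sum>i<dim_vec v. cnj (v $ i) * w $ i)"

definition herm_mat :: "nat \<Rightarrow> complex mat \<Rightarrow> bool" where
  "herm_mat n A \<longleftrightarrow> A \<in> carrier_mat n n \<and> (\<forall>i<n. \<forall>j<n. A $$ (i,j) = cnj (A $$ (j,i)))"

definition obs_mat :: "nat \<Rightarrow> complex mat \<Rightarrow> bool" where
  "obs_mat n A \<longleftrightarrow> herm_mat n A \<and> A * A = 1\<^sub>m n"

definition psd_mat :: "nat \<Rightarrow> complex mat \<Rightarrow> bool" where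
  "psd_mat n A \<longleftrightarrow> herm_mat n A \<and>
     (\<forall>v\<in>carrier_vec n. Im (cinner v (A *\<^sub>v v)) = 0 \<and> 0 \<le> Re (cinner v (A *\<^sub>v v)))"

definition msum :: "nat \<Rightarrow> 'i set \<Rightarrow> ('i \<Rightarrow> complex mat) \<Rightarrow> complex mat" where
  "msum n S f = mat n n (\<lambda>ij. \<Sum>s\<in>S. f s $$ ij)"

definition kron :: "complex mat \<Rightarrow> complex mat \<Rightarrow> complex mat" where
  "kron A B = mat (dim_row A * dim_row B) (dim_col A * dim_col B)
     (\<lambda>(i,j). A $$ (i div dim_row B, j div dim_col B) * B $$ (i mod dim_row B, j mod dim_col B))"

definition lift_A :: "nat \<Rightarrow> nat \<Rightarrow> complex mat \<Rightarrow> complex mat" where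
  "lift_A dA dB A = kron A (1\<^sub>m dB)"

definition lift_B :: "nat \<Rightarrow> nat \<Rightarrow> complex mat \<Rightarrow> complex mat" where
  "lift_B dA dB B = kron (1\<^sub>m dA) B"

definition xor_distribution :: "('x::finite \<times> 'y::finite \<Rightarrow> real) \<Rightarrow> bool" where
  "xor_distribution q \<longleftrightarrow> (\<forall>xy. 0 \<le> q xy) \<and> (\<Sum>xy\<in>UNIV. q xy) = 1"

definition game_matrix :: "('x \<times> 'y \<Rightarrow> real) \<Rightarrow> ('x \<Rightarrow> 'y \<Rightarrow> bool) \<Rightarrow> 'x \<Rightarrow> 'y \<Rightarrow> real" where
  "game_matrix q f x y = q (x,y) * (-1) ^ (if f x y then 1 else 0)"

definition game_op :: "('x::finite \<Rightarrow> 'y::finite \<Rightarrow> real) \<Rightarrow> nat \<Rightarrow> ('x \<Rightarrow> complex mat)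
     \<Rightarrow> ('y \<Rightarrow> complex mat) \<Rightarrow> complex mat" where
  "game_op \<Phi> n A B = msum n UNIV (\<lambda>(x,y). of_real (\<Phi> x y) \<cdot>\<^sub>m (A x * B y))"

definition quantum_strategy :: "nat \<Rightarrow> nat \<Rightarrow> complex vec \<Rightarrow> ('x \<Rightarrow> complex mat)
     \<Rightarrow> ('y \<Rightarrow> complex mat) \<Rightarrow> bool" where
  "quantum_strategy dA dB \<psi> A B \<longleftrightarrow> 0 < dA \<and> 0 < dB \<and> \<psi> \<in> carrier_vec (dA * dB) \<and>
     cinner \<psi> \<psi> = 1 \<and> (\<forall>x. obs_mat dA (A x)) \<and> (\<forall>y. obs_mat dB (B y))"

definition quantum_bias :: "('x::finite \<Rightarrow> 'y::finite \<Rightarrow> real) \<Rightarrow> nat \<Rightarrow> nat \<Rightarrow> complex vec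
     \<Rightarrow> ('x \<Rightarrow> complex mat) \<Rightarrow> ('y \<Rightarrow> complex mat) \<Rightarrow> real" where
  "quantum_bias \<Phi> dA dB \<psi> A B =
     Re (cinner \<psi> (game_op \<Phi> (dA * dB) (\<lambda>x. lift_A dA dB (A x)) (\<lambda>y. lift_B dA dB (B y)) *\<^sub>v \<psi>))"

definition xi_q :: "('x::finite \<Rightarrow> 'y::finite \<Rightarrow> real) \<Rightarrow> real" where
  "xi_q \<Phi> = Sup {quantum_bias \<Phi> dA dB \<psi> A B | dA dB \<psi> A B. quantum_strategy dA dB \<psi> A B}"

definition tPhi :: "('x \<Rightarrow> 'y \<Rightarrow> real) \<Rightarrow> 'x + 'y \<Rightarrow> 'x + 'y \<Rightarrow> real" where
  "tPhi \<Phi> i j = (case (i, j) of (Inl x, Inr y) \<Rightarrow> \<Phi> x y / 2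
                               | (Inr y, Inl x) \<Rightarrow> \<Phi> x y / 2
                               | _ \<Rightarrow> 0)"

text \<open>Diagonal matrix Lambda represented by its diagonal lam; feasibility: Lambda/2 - tPhi is PSD.\<close>
definition dual_feasible :: "('x::finite \<Rightarrow> 'y::finite \<Rightarrow> real) \<Rightarrow> ('x + 'y \<Rightarrow> real) \<Rightarrow> bool" where
  "dual_feasible \<Phi> lam \<longleftrightarrow>
     (\<forall>v :: 'x + 'y \<Rightarrow> real. 0 \<le> (\<Sum>i\<in>UNIV. \<Sum>j\<in>UNIV.
          v i * ((if i = j then lam i / 2 else 0) - tPhi \<Phi> i j) * v j))"

definition dual_obj :: "('x::finite + 'y::finite \<Rightarrow> real) \<Rightarrow> real" where
  "dual_obj lam = (\<Sum>i\<in>UNIV. lam i) / 2"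

definition dual_optimal :: "('x::finite \<Rightarrow> 'y::finite \<Rightarrow> real) \<Rightarrow> ('x + 'y \<Rightarrow> real) \<Rightarrow> bool" where
  "dual_optimal \<Phi> lam \<longleftrightarrow> dual_feasible \<Phi> lam \<and>
     (\<forall>lam'. dual_feasible \<Phi> lam' \<longrightarrow> dual_obj lam \<le> dual_obj lam')"

definition Pop :: "('x::finite \<Rightarrow> 'y::finite \<Rightarrow> real) \<Rightarrow> ('x + 'y \<Rightarrow> real) \<Rightarrow> real \<Rightarrow> nat
     \<Rightarrow> ('y \<Rightarrow> complex mat) \<Rightarrow> complex mat" where
  "Pop \<Phi> lam \<xi> n B = (1/2 :: complex) \<cdot>\<^sub>m
     (of_real \<xi> \<cdot>\<^sub>m 1\<^sub>m n -
      msum n UNIV (\<lambda>x. of_real (1 / lam (Inl x)) \<cdot>\<^sub>m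
        msum n UNIV (\<lambda>(y, y'). of_real (\<Phi> x y * \<Phi> x y') \<cdot>\<^sub>m (B y * B y'))))"

end

theory Submission
  imports Defs "HOL-Analysis.Analysis"
begin

lemma msum_carrier[simp]: "msum n S f \<in> carrier_mat n n"
  by (simp add: msum_def)
lemma msum_dims[simp]: "dim_row (msum n S f) = n" "dim_col (msum n S f) = n"
  by (simp_all add: msum_def)
lemma msum_index[simp]: "i < n \<Longrightarrow> j < n \<Longrightarrow> msum n S f $$ (i,j) = (\<Sum>s\<in>S. f s $$ (i,j))"
  by (simp add: msum_def)

lemma sum_pairs: fixes a b :: nat shows "(\<Sum>k<a*b. f k) = (\<Sum>p<a. \<Sum>q<b. f (p*b+q))"
proof (induction a)
  case 0 then show ?case by simp
next
  case (Suc a)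
  have "(\<Sum>k<Suc a*b. f k) = (\<Sum>k<a*b + b. f k)" by (simp add: add.commute)
  also have "\<dots> = (\<Sum>k<a*b. f k) + (\<Sum>k=a*b..<a*b+b. f k)"
    using sum.atLeastLessThan_concat[of 0 "a*b" "a*b+b" f] by (simp add: atLeast0LessThan)
  also have "(\<Sum>k=a*b..<a*b+b. f k) = (\<Sum>q<b. f (a*b+q))"
  proof -
    have "(\<Sum>k=a*b..<a*b+b. f k) = (\<Sum>k=0+a*b..<b+a*b. f k)" by (simp add: add.commute)
    also have "\<dots> = (\<Sum>q=0..<b. f (q+a*b))" by (rule sum.shift_bounds_nat_ivl)
    finally show ?thesis by (simp add: atLeast0LessThan add.commute)
  qed
  finally show ?case using Suc by simp
qed

lemma kron_dims[simp]: "dim_row (kron A B) = dim_row A * dim_row B" "dim_col (kron A B) = dim_col A * dim_col B"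
  by (simp_all add: kron_def)

lemma kron_index[simp]: "i < dim_row A * dim_row B \<Longrightarrow> j < dim_col A * dim_col B \<Longrightarrow>
  kron A B $$ (i,j) = A $$ (i div dim_row B, j div dim_col B) * B $$ (i mod dim_row B, j mod dim_col B)"
  unfolding kron_def by (subst index_mat) auto

lemma kron_carrier: "A \<in> carrier_mat a a' \<Longrightarrow> B \<in> carrier_mat b b' \<Longrightarrow> kron A B \<in> carrier_mat (a*b) (a'*b')"
  by (intro carrier_matI) (auto dest!: carrier_matD)

lemma kron_mult:
  assumes A: "A \<in> carrier_mat a a'" and C: "C \<in> carrier_mat a' a''"
    and B: "B \<in> carrier_mat b b'" and D: "D \<in> carrier_mat b' b''"
  shows "kron A B * kron C D = kron (A*C) (B*D)"
proof (rule eq_matI)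
  fix i j assume i: "i < dim_row (kron (A*C) (B*D))" and j: "j < dim_col (kron (A*C) (B*D))"
  have ib: "i < a*b" and jb: "j < a''*b''" using i j A B C D by auto
  have bpos: "0 < b" using ib by (cases "b = 0") auto
  have b2pos: "0 < b''" using jb by (cases "b'' = 0") auto
  have idiv: "i div b < a" using ib bpos by (simp add: less_mult_imp_div_less)
  have jdiv: "j div b'' < a''" using jb b2pos by (simp add: less_mult_imp_div_less)
  have "(kron A B * kron C D) $$ (i,j) = (\<Sum>k<a'*b'. kron A B $$ (i,k) * kron C D $$ (k,j))"
    using ib jb A B C D by (simp add: scalar_prod_def atLeast0LessThan)
  also have "\<dots> = (\<Sum>p<a'. \<Sum>q<b'. kron A B $$ (i,p*b'+q) * kron C D $$ (p*b'+q,j))"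
    by (rule sum_pairs)
  also have "\<dots> = (\<Sum>p<a'. \<Sum>q<b'. (A $$ (i div b, p) * C $$ (p, j div b'')) * (B $$ (i mod b, q) * D $$ (q, j mod b'')))"
  proof (intro sum.cong refl)
    fix p q assume p: "p \<in> {..<a'}" and q: "q \<in> {..<b'}"
    have k1: "p*b'+q < (p+1)*b'" using q by simp
    have k2: "(p+1)*b' \<le> a'*b'" using p by (intro mult_le_mono1) simp
    have k: "p*b'+q < a'*b'" using k1 k2 by linarith
    show "kron A B $$ (i,p*b'+q) * kron C D $$ (p*b'+q,j) = (A $$ (i div b, p) * C $$ (p, j div b'')) * (B $$ (i mod b, q) * D $$ (q, j mod b''))"
      using ib jb k A B C D q by simp
  qed
  also have "\<dots> = (\<Sum>p<a'. A $$ (i div b, p) * C $$ (p, j div b'')) * (\<Sum>q<b'. B $$ (i mod b, q) * D $$ (q, j mod b''))"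
    by (simp add: sum_product)
  also have "\<dots> = kron (A*C) (B*D) $$ (i,j)"
    using ib jb A B C D idiv jdiv bpos b2pos by (simp add: scalar_prod_def atLeast0LessThan)
  finally show "(kron A B * kron C D) $$ (i,j) = kron (A*C) (B*D) $$ (i,j)" .
qed (use A B C D in auto)


lemma kron_one_one: "kron (1\<^sub>m a) (1\<^sub>m b) = (1\<^sub>m (a*b) :: complex mat)"
proof (rule eq_matI)
  fix i j assume i: "i < dim_row (1\<^sub>m (a*b) :: complex mat)" and j: "j < dim_col (1\<^sub>m (a*b) :: complex mat)"
  then have ib: "i < a*b" and jb: "j < a*b" by auto
  have bpos: "0 < b" using ib by (cases "b = 0") auto
  have e: "(i div b = j div b \<and> i mod b = j mod b) = (i = j)"
    by (metis div_mult_mod_eq)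
  have d: "i div b < a" "j div b < a" using ib jb bpos by (simp_all add: less_mult_imp_div_less)
  have m: "i mod b < b" "j mod b < b" using bpos by auto
  have "kron (1\<^sub>m a) (1\<^sub>m b) $$ (i,j) = (1\<^sub>m a :: complex mat) $$ (i div b, j div b) * (1\<^sub>m b :: complex mat) $$ (i mod b, j mod b)"
    using ib jb by (simp only: kron_index index_one_mat dim_row_mat dim_col_mat)
  also have "\<dots> = (if i = j then 1 else 0)"
    using d m e by (simp only: index_one_mat) auto
  finally show "kron (1\<^sub>m a) (1\<^sub>m b) $$ (i,j) = (1\<^sub>m (a*b) :: complex mat) $$ (i,j)"
    using ib jb by simp
qed auto


lemma lift_A_carrier: "A \<in> carrier_mat dA dA \<Longrightarrow> lift_A dA dB A \<in> carrier_mat (dA*dB) (dA*dB)"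
  unfolding lift_A_def by (rule kron_carrier) auto
lemma lift_B_carrier: "B \<in> carrier_mat dB dB \<Longrightarrow> lift_B dA dB B \<in> carrier_mat (dA*dB) (dA*dB)"
  unfolding lift_B_def by (rule kron_carrier) auto

lemma lift_AB: "A \<in> carrier_mat dA dA \<Longrightarrow> B \<in> carrier_mat dB dB \<Longrightarrow>
   lift_A dA dB A * lift_B dA dB B = kron A B"
  unfolding lift_A_def lift_B_def by (subst kron_mult[where a=dA and a'=dA and a''=dA and b=dB and b'=dB and b''=dB]) auto
lemma lift_BA: "A \<in> carrier_mat dA dA \<Longrightarrow> B \<in> carrier_mat dB dB \<Longrightarrow>
   lift_B dA dB B * lift_A dA dB A = kron A B"
  unfolding lift_A_def lift_B_def by (subst kron_mult[where a=dA and a'=dA and a''=dA and b=dB and b'=dB and b''=dB]) auto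
lemma lift_AA: "A \<in> carrier_mat dA dA \<Longrightarrow> A * A = 1\<^sub>m dA \<Longrightarrow>
   lift_A dA dB A * lift_A dA dB A = 1\<^sub>m (dA*dB)"
  unfolding lift_A_def by (subst kron_mult[where a=dA and a'=dA and a''=dA and b=dB and b'=dB and b''=dB]) (auto simp: kron_one_one)
lemma lift_BB: "B \<in> carrier_mat dB dB \<Longrightarrow> B * B = 1\<^sub>m dB \<Longrightarrow>
   lift_B dA dB B * lift_B dA dB B = 1\<^sub>m (dA*dB)"
  unfolding lift_B_def by (subst kron_mult[where a=dA and a'=dA and a''=dA and b=dB and b'=dB and b''=dB]) (auto simp: kron_one_one)

lemma herm_kron: "herm_mat a A \<Longrightarrow> herm_mat b B \<Longrightarrow> herm_mat (a*b) (kron A B)"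
  unfolding herm_mat_def
proof (intro conjI allI impI)
  assume h: "A \<in> carrier_mat a a \<and> (\<forall>i<a. \<forall>j<a. A $$ (i, j) = cnj (A $$ (j, i)))"
     "B \<in> carrier_mat b b \<and> (\<forall>i<b. \<forall>j<b. B $$ (i, j) = cnj (B $$ (j, i)))"
  show "kron A B \<in> carrier_mat (a*b) (a*b)" using h by (intro kron_carrier) auto
  fix i j assume i: "i < a*b" and j: "j < a*b"
  have bpos: "0 < b" using i by (cases "b = 0") auto
  have "i div b < a" "j div b < a" using i j bpos by (simp_all add: less_mult_imp_div_less)
  moreover have "i mod b < b" "j mod b < b" using bpos by auto
  ultimately have r: "i div b < a" "j div b < a" "i mod b < b" "j mod b < b" by auto
  have dims: "dim_row A = a" "dim_col A = a" "dim_row B = b" "dim_col B = b" using h by auto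
  have e1: "kron A B $$ (i,j) = A$$(i div b, j div b) * B$$(i mod b, j mod b)"
    using i j dims by (simp only: kron_index)
  have e2: "kron A B $$ (j,i) = A$$(j div b, i div b) * B$$(j mod b, i mod b)"
    using i j dims by (simp only: kron_index)
  have "A$$(i div b, j div b) = cnj (A$$(j div b, i div b))" using h r by blast
  moreover have "B$$(i mod b, j mod b) = cnj (B$$(j mod b, i mod b))" using h r by blast
  ultimately show "kron A B $$ (i, j) = cnj (kron A B $$ (j, i))" unfolding e1 e2 by simp
qed

lemma herm_one: "herm_mat n (1\<^sub>m n)"
  unfolding herm_mat_def by auto

lemma herm_lift_A: "herm_mat dA A \<Longrightarrow> herm_mat (dA*dB) (lift_A dA dB A)"
  unfolding lift_A_def by (rule herm_kron) (auto simp: herm_one)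
lemma herm_lift_B: "herm_mat dB B \<Longrightarrow> herm_mat (dA*dB) (lift_B dA dB B)"
  unfolding lift_B_def by (rule herm_kron) (auto simp: herm_one)


lemma cinner_mat: "M \<in> carrier_mat n n \<Longrightarrow> v \<in> carrier_vec n \<Longrightarrow> w \<in> carrier_vec n \<Longrightarrow>
  cinner w (M *\<^sub>v v) = (\<Sum>i<n. \<Sum>j<n. cnj (w$i) * M$$(i,j) * v$j)"
  unfolding cinner_def by (simp add: scalar_prod_def atLeast0LessThan sum_distrib_left mult.assoc)

lemma cinner_msum: assumes "finite S" "\<And>s. s \<in> S \<Longrightarrow> f s \<in> carrier_mat n n"
  "v \<in> carrier_vec n" "w \<in> carrier_vec n"
  shows "cinner w (msum n S f *\<^sub>v v) = (\<Sum>s\<in>S. cinner w (f s *\<^sub>v v))"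
proof -
  have "cinner w (msum n S f *\<^sub>v v) = (\<Sum>i<n. \<Sum>j<n. cnj (w$i) * msum n S f$$(i,j) * v$j)"
    using assms by (intro cinner_mat) auto
  also have "\<dots> = (\<Sum>i<n. \<Sum>j<n. \<Sum>s\<in>S. cnj (w$i) * f s$$(i,j) * v$j)"
    by (simp add: sum_distrib_left sum_distrib_right)
  also have "\<dots> = (\<Sum>s\<in>S. \<Sum>i<n. \<Sum>j<n. cnj (w$i) * f s$$(i,j) * v$j)"
    by (simp only: sum.swap[where B=S and A="{..<n}"])
  also have "\<dots> = (\<Sum>s\<in>S. cinner w (f s *\<^sub>v v))"
  proof (rule sum.cong[OF refl])
    fix s assume "s \<in> S"
    then show "(\<Sum>i<n. \<Sum>j<n. cnj (w$i) * f s$$(i,j) * v$j) = cinner w (f s *\<^sub>v v)"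
      using assms(2-4) cinner_mat[of "f s" n v w] by simp
  qed
  finally show ?thesis .
qed

lemma cinner_smult: assumes "M \<in> carrier_mat n n" "v \<in> carrier_vec n" "w \<in> carrier_vec n"
  shows "cinner w ((c \<cdot>\<^sub>m M) *\<^sub>v v) = c * cinner w (M *\<^sub>v v)"
proof -
  have "cinner w ((c \<cdot>\<^sub>m M) *\<^sub>v v) = (\<Sum>i<n. \<Sum>j<n. cnj (w$i) * (c \<cdot>\<^sub>m M)$$(i,j) * v$j)"
    using assms by (intro cinner_mat) auto
  also have "\<dots> = (\<Sum>i<n. \<Sum>j<n. c * (cnj (w$i) * M$$(i,j) * v$j))"
    using assms by (intro sum.cong refl) auto
  also have "\<dots> = c * cinner w (M *\<^sub>v v)"
    using assms by (simp add: cinner_mat sum_distrib_left)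
  finally show ?thesis .
qed

lemma Re_cinner: "dim_vec p = n \<Longrightarrow>
  Re (cinner p q) = (\<Sum>k<n. Re (p$k) * Re (q$k) + Im (p$k) * Im (q$k))"
  unfolding cinner_def by simp

lemma cinner_herm: assumes "herm_mat n M" "v \<in> carrier_vec n" "w \<in> carrier_vec n"
  shows "cinner w (M *\<^sub>v v) = cinner (M *\<^sub>v w) v"
proof -
  have M: "M \<in> carrier_mat n n" using assms herm_mat_def by auto
  have "cinner (M *\<^sub>v w) v = (\<Sum>i<n. cnj (\<Sum>j<n. M$$(i,j) * w$j) * v$i)"
    using M assms unfolding cinner_def by (simp add: scalar_prod_def atLeast0LessThan)
  also have "\<dots> = (\<Sum>i<n. \<Sum>j<n. cnj (w$j) * M$$(j,i) * v$i)"
  proof (rule sum.cong[OF refl])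
    fix i assume i: "i \<in> {..<n}"
    have "cnj (\<Sum>j<n. M$$(i,j) * w$j) * v$i = (\<Sum>j<n. cnj (M$$(i,j)) * cnj (w$j) * v$i)"
      by (simp add: sum_distrib_right)
    also have "\<dots> = (\<Sum>j<n. cnj (w$j) * M$$(j,i) * v$i)"
    proof (rule sum.cong[OF refl])
      fix j assume j: "j \<in> {..<n}"
      have "M$$(j,i) = cnj (M$$(i,j))" using assms(1) i j unfolding herm_mat_def by blast
      then show "cnj (M$$(i,j)) * cnj (w$j) * v$i = cnj (w$j) * M$$(j,i) * v$i" by simp
    qed
    finally show "cnj (\<Sum>j<n. M$$(i,j) * w$j) * v$i = (\<Sum>j<n. cnj (w$j) * M$$(j,i) * v$i)" .
  qed
  also have "\<dots> = cinner w (M *\<^sub>v v)"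
    unfolding cinner_mat[OF M assms(2,3)] by (rule sum.swap)
  finally show ?thesis by simp
qed

lemma herm_cinner_real: assumes "herm_mat n M" "v \<in> carrier_vec n"
  shows "Im (cinner v (M *\<^sub>v v)) = 0"
proof -
  have M: "M \<in> carrier_mat n n" using assms herm_mat_def by auto
  have "cnj (cinner v (M *\<^sub>v v)) = (\<Sum>i<n. \<Sum>j<n. v$i * cnj (M$$(i,j)) * cnj (v$j))"
    using M assms by (simp add: cinner_mat)
  also have "\<dots> = (\<Sum>i<n. \<Sum>j<n. cnj (v$j) * M$$(j,i) * v$i)"
  proof (intro sum.cong refl)
    fix i j assume i: "i \<in> {..<n}" and j: "j \<in> {..<n}"
    have "M$$(j,i) = cnj (M$$(i,j))" using assms(1) i j unfolding herm_mat_def by blast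
    then show "v$i * cnj (M$$(i,j)) * cnj (v$j) = cnj (v$j) * M$$(j,i) * v$i" by simp
  qed
  also have "\<dots> = cinner v (M *\<^sub>v v)"
    unfolding cinner_mat[OF M assms(2,2)] by (rule sum.swap)
  finally have "cnj (cinner v (M *\<^sub>v v)) = cinner v (M *\<^sub>v v)" .
  then show ?thesis by (metis Im_complex_of_real Reals_cnj_iff complex_is_Real_iff)
qed


definition sgnb :: "nat \<Rightarrow> nat \<Rightarrow> real" where
  "sgnb i s = (\<Prod>k<i. if bit s k then -1 else 1)"
definition cg :: "nat \<Rightarrow> nat \<Rightarrow> nat \<Rightarrow> real" where
  "cg i t s = (if t = flip_bit i s then sgnb i s else 0)"
definition gam :: "nat \<Rightarrow> (nat \<Rightarrow> real) \<Rightarrow> complex mat" where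
  "gam K u = Matrix.mat (2^K) (2^K) (\<lambda>(t,s). complex_of_real (\<Sum>i<K. u i * cg i t s))"

lemma flip_flip[simp]: "flip_bit i (flip_bit i (s::nat)) = s"
  by (rule bit_eqI) (auto simp: bit_flip_bit_iff)
lemma flip_comm: "flip_bit i (flip_bit j (s::nat)) = flip_bit j (flip_bit i s)"
  by (rule bit_eqI) (auto simp: bit_flip_bit_iff)
lemma flip_ne: assumes "i \<noteq> j" shows "flip_bit i (s::nat) \<noteq> flip_bit j s"
proof
  assume eq: "flip_bit i s = flip_bit j s"
  have "bit (flip_bit i s) i \<noteq> bit (flip_bit j s) i" using assms by (simp add: bit_flip_bit_iff)
  then show False using eq by simp
qed
lemma flip_less: "(s::nat) < 2^K \<Longrightarrow> i < K \<Longrightarrow> flip_bit i s < 2^K"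
  by (metis take_bit_flip_bit_eq take_bit_nat_eq_self_iff not_le)
lemma flip_eq_iff: "(t = flip_bit i (s::nat)) = (s = flip_bit i t)"
  by auto

lemma sgnb_sq: "sgnb i s * sgnb i s = 1"
  unfolding sgnb_def prod.distrib[symmetric] by (rule prod.neutral) auto

lemma sgnb_flip_ge: "i \<le> j \<Longrightarrow> sgnb i (flip_bit j s) = sgnb i s"
  unfolding sgnb_def by (rule prod.cong) (auto simp: bit_flip_bit_iff)

lemma sgnb_flip_lt: assumes "j < i" shows "sgnb i (flip_bit j s) = - sgnb i s"
proof -
  have j: "j \<in> {..<i}" using assms by simp
  have "sgnb i (flip_bit j s) = (if bit (flip_bit j s) j then -1 else 1) *
      (\<Prod>k\<in>{..<i}-{j}. if bit (flip_bit j s) k then -1 else 1)"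
    unfolding sgnb_def by (rule prod.remove[OF _ j]) simp
  also have "(\<Prod>k\<in>{..<i}-{j}. if bit (flip_bit j s) k then -1 else 1) =
     (\<Prod>k\<in>{..<i}-{j}. if bit s k then -1 else (1::real))"
    by (rule prod.cong) (auto simp: bit_flip_bit_iff)
  also have "(if bit (flip_bit j s) j then -1 else 1) = - (if bit s j then -1 else (1::real))"
    by (simp add: bit_flip_bit_iff)
  finally have "sgnb i (flip_bit j s) = - ((if bit s j then -1 else 1) *
      (\<Prod>k\<in>{..<i}-{j}. if bit s k then -1 else (1::real)))" by simp
  also have "\<dots> = - sgnb i s"
    unfolding sgnb_def by (subst prod.remove[OF _ j]) simp_all
  finally show ?thesis .
qed

lemma cg_sym: "cg i t s = cg i s t"
  unfolding cg_def by (auto simp: sgnb_flip_ge)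

lemma gam_carrier: "gam K u \<in> carrier_mat (2^K) (2^K)"
  unfolding gam_def by simp

lemma gam_index: "t < 2^K \<Longrightarrow> s < 2^K \<Longrightarrow> gam K u $$ (t,s) = complex_of_real (\<Sum>i<K. u i * cg i t s)"
  unfolding gam_def by simp

lemma herm_gam: "herm_mat (2^K) (gam K u)"
  unfolding herm_mat_def
proof (intro conjI allI impI gam_carrier)
  fix t s :: nat assume t: "t < 2^K" and s: "s < 2^K"
  have "(\<Sum>i<K. u i * cg i t s) = (\<Sum>i<K. u i * cg i s t)"
    by (intro sum.cong refl) (rule arg_cong[OF cg_sym])
  then show "gam K u $$ (t, s) = cnj (gam K u $$ (s, t))"
    using t s by (simp only: gam_index complex_cnj_complex_of_real)
qed

lemma antisym_sum:
  fixes f :: "'a \<Rightarrow> 'a \<Rightarrow> real"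
  assumes "finite A" "\<And>i j. i \<noteq> j \<Longrightarrow> f i j = - f j i"
  shows "(\<Sum>i\<in>A. \<Sum>j\<in>A. f i j) = (\<Sum>i\<in>A. f i i)"
proof -
  define g where "g i j = (if i = j then 0 else f i j)" for i j
  have gi: "g i j = - g j i" for i j
  proof (cases "i = j")
    case True then show ?thesis by (simp add: g_def)
  next
    case False then show ?thesis using assms(2)[of i j] by (simp add: g_def)
  qed
  have "(\<Sum>i\<in>A. \<Sum>j\<in>A. g i j) = (\<Sum>j\<in>A. \<Sum>i\<in>A. g i j)" by (rule sum.swap)
  also have "\<dots> = (\<Sum>j\<in>A. \<Sum>i\<in>A. - g j i)"
    by (intro sum.cong refl) (rule gi)
  also have "\<dots> = - (\<Sum>i\<in>A. \<Sum>j\<in>A. g i j)" by (simp add: sum_negf)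
  finally have g0: "(\<Sum>i\<in>A. \<Sum>j\<in>A. g i j) = 0" by simp
  have "(\<Sum>i\<in>A. \<Sum>j\<in>A. f i j) = (\<Sum>i\<in>A. \<Sum>j\<in>A. g i j + (if i = j then f i i else 0))"
    by (intro sum.cong refl) (auto simp: g_def)
  also have "\<dots> = (\<Sum>i\<in>A. \<Sum>j\<in>A. g i j) + (\<Sum>i\<in>A. f i i)"
    using assms(1) by (simp add: sum.distrib)
  finally show ?thesis using g0 by simp
qed

lemma inner_r: assumes "s < 2^K" "j < K"
  shows "(\<Sum>r<2^K. cg i t r * cg j r s) = cg i t (flip_bit j s) * sgnb j s"
proof -
  have "(\<Sum>r<2^K. cg i t r * cg j r s) = (\<Sum>r<2^K. if r = flip_bit j s then cg i t (flip_bit j s) * sgnb j s else 0)"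
    by (intro sum.cong refl) (auto simp: cg_def[of j])
  also have "\<dots> = cg i t (flip_bit j s) * sgnb j s"
    using flip_less[OF assms] by simp
  finally show ?thesis .
qed

lemma e_diag: "cg i t (flip_bit i s) * sgnb i s = (if t = s then 1 else 0)"
  unfolding cg_def by (auto simp: sgnb_flip_ge sgnb_sq)

lemma e_anti_lt: assumes "i < j"
  shows "cg i t (flip_bit j s) * sgnb j s = - (cg j t (flip_bit i s) * sgnb i s)"
  unfolding cg_def using assms by (auto simp: sgnb_flip_ge sgnb_flip_lt flip_comm)

lemma e_anti: assumes "i \<noteq> j"
  shows "cg i t (flip_bit j s) * sgnb j s = - (cg j t (flip_bit i s) * sgnb i s)"
proof (cases "i < j")
  case True then show ?thesis by (rule e_anti_lt)
next
  case False then have "j < i" using assms by simp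
  from e_anti_lt[OF this, of t s] show ?thesis by simp
qed

lemma gam_sq: assumes "(\<Sum>i<K. (u i)^2) = 1"
  shows "gam K u * gam K u = 1\<^sub>m (2^K)"
proof (rule eq_matI)
  fix t s assume t: "t < dim_row (1\<^sub>m (2^K) :: complex mat)" and s: "s < dim_col (1\<^sub>m (2^K) :: complex mat)"
  then have t: "t < 2^K" and s: "s < 2^K" by auto
  have "(gam K u * gam K u) $$ (t,s) = (\<Sum>r<2^K. gam K u $$ (t,r) * gam K u $$ (r,s))"
    using t s gam_carrier[of K u] by (simp add: scalar_prod_def atLeast0LessThan)
  also have "\<dots> = complex_of_real (\<Sum>r<2^K. (\<Sum>i<K. u i * cg i t r) * (\<Sum>j<K. u j * cg j r s))"
    using t s by (simp add: gam_index)
  also have "(\<Sum>r<2^K. (\<Sum>i<K. u i * cg i t r) * (\<Sum>j<K. u j * cg j r s)) =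
     (\<Sum>i<K. \<Sum>j<K. u i * u j * (\<Sum>r<(2::nat)^K. cg i t r * cg j r s))"
    by (simp add: sum_product sum_distrib_left sum.swap[where A="{..<(2::nat)^K}"] mult_ac)
  also have "\<dots> = (\<Sum>i<K. \<Sum>j<K. u i * u j * (cg i t (flip_bit j s) * sgnb j s))"
    using s by (intro sum.cong refl) (simp add: inner_r)
  also have "\<dots> = (\<Sum>i<K. u i * u i * (cg i t (flip_bit i s) * sgnb i s))"
  proof (rule antisym_sum)
    fix i j :: nat assume ij: "i \<noteq> j"
    have h: "cg i t (flip_bit j s) * sgnb j s = - (cg j t (flip_bit i s) * sgnb i s)"
      by (rule e_anti[OF ij])
    show "u i * u j * (cg i t (flip_bit j s) * sgnb j s) = - (u j * u i * (cg j t (flip_bit i s) * sgnb i s))"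
      unfolding h by (simp add: mult_ac)
  qed simp
  also have "\<dots> = (\<Sum>i<K. (u i)^2) * (if t = s then 1 else 0)"
    by (simp add: e_diag sum_distrib_right power2_eq_square)
  finally show "(gam K u * gam K u) $$ (t,s) = (1\<^sub>m (2^K) :: complex mat) $$ (t,s)"
    using t s assms by simp
qed (use gam_carrier in auto)

lemma obs_gam: "(\<Sum>i<K. (u i)^2) = 1 \<Longrightarrow> obs_mat (2^K) (gam K u)"
  unfolding obs_mat_def using herm_gam gam_sq by blast


definition psi :: "nat \<Rightarrow> complex Matrix.vec" where
  "psi d = Matrix.vec (d*d) (\<lambda>k. complex_of_real (if k div d = k mod d then 1 / sqrt d else 0))"

lemma psi_carrier: "psi d \<in> carrier_vec (d*d)"
  unfolding psi_def by simp

lemma psi_index: "p < d \<Longrightarrow> q < d \<Longrightarrow> psi d $ (p*d+q) = complex_of_real (if p = q then 1 / sqrt d else 0)"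
proof -
  assume p: "p < d" and q: "q < d"
  have k: "p*d+q < d*d"
  proof -
    have "p*d+q < (p+1)*d" using q by simp
    also have "\<dots> \<le> d*d" using p by (intro mult_le_mono1) simp
    finally show ?thesis .
  qed
  have "(p*d+q) div d = p" "(p*d+q) mod d = q" using q by auto
  then show ?thesis unfolding psi_def using k by simp
qed

lemma pair_less: "p < (d::nat) \<Longrightarrow> q < d \<Longrightarrow> p*d+q < d*d"
proof -
  assume p: "p < d" and q: "q < d"
  have "p*d+q < (p+1)*d" using q by simp
  also have "\<dots> \<le> d*d" using p by (intro mult_le_mono1) simp
  finally show ?thesis .
qed

lemma inv_sqrt_sq: "complex_of_real (1/sqrt (real d)) * complex_of_real (1/sqrt (real d)) = complex_of_real (1/real d)"
proof -
  have s: "sqrt (real d) * sqrt (real d) = real d" by simp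
  have "(1/sqrt (real d)) * (1/sqrt (real d)) = 1 / (sqrt (real d) * sqrt (real d))" by simp
  then have "(1/sqrt (real d)) * (1/sqrt (real d)) = 1 / real d" unfolding s .
  then show ?thesis by (metis of_real_mult)
qed

lemma cinner_psi: assumes "0 < d" shows "cinner (psi d) (psi d) = 1"
proof -
  have "cinner (psi d) (psi d) = (\<Sum>k<d*d. cnj (psi d $ k) * psi d $ k)"
    unfolding cinner_def using psi_carrier[of d] by simp
  also have "\<dots> = (\<Sum>p<d. \<Sum>q<d. cnj (psi d $ (p*d+q)) * psi d $ (p*d+q))"
    by (rule sum_pairs)
  also have "\<dots> = (\<Sum>p<d. \<Sum>q<d. if q = p then complex_of_real (1/d) else 0)"
  proof (intro sum.cong refl)
    fix p q show "p \<in> {..<d} \<Longrightarrow> q \<in> {..<d} \<Longrightarrow> cnj (psi d $ (p*d+q)) * psi d $ (p*d+q) = (if q = p then complex_of_real (1/d) else 0)"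
    proof -
      assume pq: "p \<in> {..<d}" "q \<in> {..<d}"
      have e: "psi d $ (p*d+q) = complex_of_real (if p = q then 1/sqrt d else 0)"
        using pq by (intro psi_index) auto
      show ?thesis
      proof (cases "q = p")
        case True
        then show ?thesis unfolding e by (simp only: if_True refl complex_cnj_complex_of_real inv_sqrt_sq)
      next
        case False
        then show ?thesis unfolding e by simp
      qed
    qed
  qed
  also have "\<dots> = 1" using assms by simp
  finally show ?thesis .
qed

lemma psi_kron: assumes A: "A \<in> carrier_mat d d" and B: "B \<in> carrier_mat d d"
  shows "cinner (psi d) (kron A B *\<^sub>v psi d) = complex_of_real (1/d) * (\<Sum>p<d. \<Sum>q<d. A$$(p,q) * B$$(p,q))"
proof -
  have KC: "kron A B \<in> carrier_mat (d*d) (d*d)" using A B by (rule kron_carrier)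
  define c where "c = complex_of_real (1 / sqrt d)"
  have cc: "cnj c * c = complex_of_real (1/d)"
    unfolding c_def complex_cnj_complex_of_real by (rule inv_sqrt_sq)
  have "cinner (psi d) (kron A B *\<^sub>v psi d) = (\<Sum>k<d*d. \<Sum>l<d*d. cnj (psi d $ k) * kron A B $$ (k,l) * psi d $ l)"
    by (rule cinner_mat[OF KC psi_carrier psi_carrier])
  also have "\<dots> = (\<Sum>p<d. \<Sum>p'<d. \<Sum>q<d. \<Sum>q'<d. cnj (psi d $ (p*d+p')) * kron A B $$ (p*d+p',q*d+q') * psi d $ (q*d+q'))"
    by (simp only: sum_pairs)
  also have "\<dots> = (\<Sum>p<d. \<Sum>p'<d. \<Sum>q<d. \<Sum>q'<d. if p' = p then (if q' = q then cnj c * c * (A$$(p,q) * B$$(p,q)) else 0) else 0)"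
  proof (intro sum.cong refl)
    fix p p' q q' assume p: "p \<in> {..<d}" and p': "p' \<in> {..<d}" and q: "q \<in> {..<d}" and q': "q' \<in> {..<d}"
    have dims: "dim_row A = d" "dim_col A = d" "dim_row B = d" "dim_col B = d" using A B by auto
    have k1: "p*d+p' < dim_row A * dim_row B" "q*d+q' < dim_col A * dim_col B"
      using p p' q q' dims by (auto intro: pair_less)
    have dm: "(p*d+p') div d = p" "(p*d+p') mod d = p'" "(q*d+q') div d = q" "(q*d+q') mod d = q'"
      using p' q' by auto
    have "kron A B $$ (p*d+p',q*d+q') = A$$(p,q) * B$$(p',q')"
      using kron_index[OF k1] dims dm by simp
    then show "cnj (psi d $ (p*d+p')) * kron A B $$ (p*d+p',q*d+q') * psi d $ (q*d+q') =
      (if p' = p then (if q' = q then cnj c * c * (A$$(p,q) * B$$(p,q)) else 0) else 0)"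
      using p p' q q' by (auto simp: psi_index c_def)
  qed
  also have "\<dots> = (\<Sum>p<d. \<Sum>q<d. cnj c * c * (A$$(p,q) * B$$(p,q)))"
  proof (rule sum.cong[OF refl])
    fix p assume p: "p \<in> {..<d}"
    define X where "X q = cnj c * c * (A$$(p,q) * B$$(p,q))" for q
    have "(\<Sum>p'<d. \<Sum>q<d. \<Sum>q'<d. if p' = p then (if q' = q then X q else 0) else 0)
        = (\<Sum>p'<d. \<Sum>q<d. if p' = p then X q else 0)"
      by (intro sum.cong refl) (auto simp: sum.delta')
    also have "\<dots> = (\<Sum>p'<d. if p' = p then (\<Sum>q<d. X q) else 0)"
      by (intro sum.cong refl) auto
    also have "\<dots> = (\<Sum>q<d. X q)" using p by (simp add: sum.delta')
    finally show "(\<Sum>p'<d. \<Sum>q<d. \<Sum>q'<d. if p' = p then (if q' = q then cnj c * c * (A$$(p,q) * B$$(p,q)) else 0) else 0)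
        = (\<Sum>q<d. cnj c * c * (A$$(p,q) * B$$(p,q)))" unfolding X_def .
  qed
  also have "\<dots> = complex_of_real (1/d) * (\<Sum>p<d. \<Sum>q<d. A$$(p,q) * B$$(p,q))"
    unfolding cc by (simp add: sum_distrib_left)
  finally show ?thesis .
qed

lemma cc_sum: assumes "i < K" "j < K"
  shows "(\<Sum>p<(2::nat)^K. \<Sum>q<(2::nat)^K. cg i p q * cg j p q) = (if i = j then 2^K else 0)"
proof -
  have "(\<Sum>p<(2::nat)^K. \<Sum>q<(2::nat)^K. cg i p q * cg j p q) = (\<Sum>q<(2::nat)^K. \<Sum>p<(2::nat)^K. cg i p q * cg j p q)"
    by (rule sum.swap)
  also have "\<dots> = (\<Sum>q<(2::nat)^K. if i = j then 1 else 0)"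
  proof (rule sum.cong[OF refl])
    fix q assume q: "q \<in> {..<(2::nat)^K}"
    have "(\<Sum>p<(2::nat)^K. cg i p q * cg j p q) = (\<Sum>p<(2::nat)^K. if p = flip_bit j q then cg i (flip_bit j q) q * sgnb j q else 0)"
      by (intro sum.cong refl) (auto simp: cg_def[of j])
    also have "\<dots> = cg i (flip_bit j q) q * sgnb j q"
      using flip_less[of q K j] q assms by simp
    also have "\<dots> = (if i = j then 1 else 0)"
      unfolding cg_def using flip_ne[of i j q] by (auto simp: sgnb_sq)
    finally show "(\<Sum>p<(2::nat)^K. cg i p q * cg j p q) = (if i = j then 1 else 0)" .
  qed
  also have "\<dots> = (if i = j then 2^K else 0)" by simp
  finally show ?thesis .
qed

lemma gam_pair: "(\<Sum>p<(2::nat)^K. \<Sum>q<(2::nat)^K. gam K u $$ (p,q) * gam K v $$ (p,q)) =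
    complex_of_real (2^K * (\<Sum>i<K. u i * v i))"
proof -
  have "(\<Sum>p<(2::nat)^K. \<Sum>q<(2::nat)^K. gam K u $$ (p,q) * gam K v $$ (p,q)) =
     complex_of_real (\<Sum>p<(2::nat)^K. \<Sum>q<(2::nat)^K. (\<Sum>i<K. u i * cg i p q) * (\<Sum>j<K. v j * cg j p q))"
    by (simp add: gam_index)
  also have "(\<Sum>p<(2::nat)^K. \<Sum>q<(2::nat)^K. (\<Sum>i<K. u i * cg i p q) * (\<Sum>j<K. v j * cg j p q)) =
     (\<Sum>i<K. \<Sum>j<K. u i * v j * (\<Sum>p<(2::nat)^K. \<Sum>q<(2::nat)^K. cg i p q * cg j p q))"
  proof -
    have "(\<Sum>p<(2::nat)^K. \<Sum>q<(2::nat)^K. (\<Sum>i<K. u i * cg i p q) * (\<Sum>j<K. v j * cg j p q)) =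
      (\<Sum>p<(2::nat)^K. \<Sum>q<(2::nat)^K. \<Sum>i<K. \<Sum>j<K. u i * v j * (cg i p q * cg j p q))"
      by (intro sum.cong refl) (simp add: sum_product mult_ac)
    also have "\<dots> = (\<Sum>i<K. \<Sum>j<K. \<Sum>p<(2::nat)^K. \<Sum>q<(2::nat)^K. u i * v j * (cg i p q * cg j p q))"
      by (simp only: sum.swap[where A="{..<(2::nat)^K}" and B="{..<K}"])
    also have "\<dots> = (\<Sum>i<K. \<Sum>j<K. u i * v j * (\<Sum>p<(2::nat)^K. \<Sum>q<(2::nat)^K. cg i p q * cg j p q))"
      by (simp only: sum_distrib_left)
    finally show ?thesis .
  qed
  also have "\<dots> = (\<Sum>i<K. \<Sum>j<K. u i * v j * (if i = j then 2^K else 0))"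
    by (intro sum.cong refl) (simp add: cc_sum)
  also have "\<dots> = (\<Sum>i<K. u i * v i * 2^K)"
  proof (rule sum.cong[OF refl])
    fix i assume i: "i \<in> {..<K}"
    have "\<And>j. u i * v j * (if i = j then 2^K else 0) = (if i = j then u i * v i * 2^K else (0::real))" by simp
    then show "(\<Sum>j<K. u i * v j * (if i = j then 2^K else 0)) = u i * v i * 2^K"
      using i by (simp only: sum.delta) simp
  qed
  also have "\<dots> = 2^K * (\<Sum>i<K. u i * v i)"
    by (simp add: sum_distrib_left mult_ac)
  finally show ?thesis .
qed


lemma bias_expand:
  fixes \<Phi> :: "'x::finite \<Rightarrow> 'y::finite \<Rightarrow> real"
  assumes A: "\<And>x. A x \<in> carrier_mat dA dA" and B: "\<And>y. B y \<in> carrier_mat dB dB"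
    and psi: "\<psi> \<in> carrier_vec (dA*dB)"
  shows "quantum_bias \<Phi> dA dB \<psi> A B = (\<Sum>x\<in>UNIV. \<Sum>y\<in>UNIV. \<Phi> x y *
     Re (cinner \<psi> ((lift_A dA dB (A x) * lift_B dA dB (B y)) *\<^sub>v \<psi>)))"
proof -
  let ?n = "dA*dB"
  let ?P = "\<lambda>x y. lift_A dA dB (A x) * lift_B dA dB (B y)"
  have PC: "\<And>x y. ?P x y \<in> carrier_mat ?n ?n"
    using lift_A_carrier[OF A] lift_B_carrier[OF B] by (metis mult_carrier_mat)
  have FC: "\<And>p. (\<lambda>(x,y). complex_of_real (\<Phi> x y) \<cdot>\<^sub>m ?P x y) p \<in> carrier_mat ?n ?n"
    using PC by (auto split: prod.splits)
  have "cinner \<psi> (game_op \<Phi> ?n (\<lambda>x. lift_A dA dB (A x)) (\<lambda>y. lift_B dA dB (B y)) *\<^sub>v \<psi>)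
      = (\<Sum>p\<in>UNIV. cinner \<psi> ((\<lambda>(x,y). complex_of_real (\<Phi> x y) \<cdot>\<^sub>m ?P x y) p *\<^sub>v \<psi>))"
    unfolding game_op_def by (rule cinner_msum) (use FC psi in auto)
  also have "\<dots> = (\<Sum>p\<in>UNIV. complex_of_real (\<Phi> (fst p) (snd p)) * cinner \<psi> (?P (fst p) (snd p) *\<^sub>v \<psi>))"
  proof (rule sum.cong[OF refl])
    fix p :: "'x \<times> 'y"
    obtain x y where p: "p = (x,y)" by fastforce
    show "cinner \<psi> ((\<lambda>(x,y). complex_of_real (\<Phi> x y) \<cdot>\<^sub>m ?P x y) p *\<^sub>v \<psi>) =
      complex_of_real (\<Phi> (fst p) (snd p)) * cinner \<psi> (?P (fst p) (snd p) *\<^sub>v \<psi>)"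
      unfolding p using cinner_smult[OF PC[of x y] psi psi] by simp
  qed
  finally have "quantum_bias \<Phi> dA dB \<psi> A B = (\<Sum>p\<in>UNIV. \<Phi> (fst p) (snd p) * Re (cinner \<psi> (?P (fst p) (snd p) *\<^sub>v \<psi>)))"
    unfolding quantum_bias_def by simp
  also have "\<dots> = (\<Sum>x\<in>UNIV. \<Sum>y\<in>UNIV. \<Phi> x y * Re (cinner \<psi> (?P x y *\<^sub>v \<psi>)))"
    by (simp add: sum.cartesian_product split_def UNIV_Times_UNIV[symmetric] del: UNIV_Times_UNIV)
  finally show ?thesis .
qed

lemma clifford_strategy:
  fixes \<Phi> :: "'x::finite \<Rightarrow> 'y::finite \<Rightarrow> real" and u :: "'x \<Rightarrow> nat \<Rightarrow> real" and v :: "'y \<Rightarrow> nat \<Rightarrow> real"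
  assumes u: "\<And>x. (\<Sum>k<K. (u x k)^2) = 1" and v: "\<And>y. (\<Sum>k<K. (v y k)^2) = 1"
  shows "quantum_strategy (2^K) (2^K) (psi (2^K)) (\<lambda>x. gam K (u x)) (\<lambda>y. gam K (v y)) \<and>
    quantum_bias \<Phi> (2^K) (2^K) (psi (2^K)) (\<lambda>x. gam K (u x)) (\<lambda>y. gam K (v y))
      = (\<Sum>x\<in>UNIV. \<Sum>y\<in>UNIV. \<Phi> x y * (\<Sum>k<K. u x k * v y k))"
proof
  show "quantum_strategy (2^K) (2^K) (psi (2^K)) (\<lambda>x. gam K (u x)) (\<lambda>y. gam K (v y))"
    unfolding quantum_strategy_def using psi_carrier cinner_psi obs_gam[OF u] obs_gam[OF v] by simp
  let ?d = "(2::nat)^K"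
  have "quantum_bias \<Phi> ?d ?d (psi ?d) (\<lambda>x. gam K (u x)) (\<lambda>y. gam K (v y)) =
     (\<Sum>x\<in>UNIV. \<Sum>y\<in>UNIV. \<Phi> x y * Re (cinner (psi ?d) ((lift_A ?d ?d (gam K (u x)) * lift_B ?d ?d (gam K (v y))) *\<^sub>v psi ?d)))"
    by (rule bias_expand) (auto simp: gam_carrier psi_carrier)
  also have "\<dots> = (\<Sum>x\<in>UNIV. \<Sum>y\<in>UNIV. \<Phi> x y * (\<Sum>k<K. u x k * v y k))"
  proof (intro sum.cong refl)
    fix x y
    have "cinner (psi ?d) ((lift_A ?d ?d (gam K (u x)) * lift_B ?d ?d (gam K (v y))) *\<^sub>v psi ?d)
        = cinner (psi ?d) (kron (gam K (u x)) (gam K (v y)) *\<^sub>v psi ?d)"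
      by (simp add: lift_AB gam_carrier)
    also have "\<dots> = complex_of_real (1/?d) * complex_of_real (?d * (\<Sum>k<K. u x k * v y k))"
      by (simp only: psi_kron gam_carrier gam_pair) simp
    also have "\<dots> = complex_of_real (\<Sum>k<K. u x k * v y k)"
      by (simp del: of_real_sum)
    finally show "\<Phi> x y * Re (cinner (psi ?d) ((lift_A ?d ?d (gam K (u x)) * lift_B ?d ?d (gam K (v y))) *\<^sub>v psi ?d)) =
      \<Phi> x y * (\<Sum>k<K. u x k * v y k)" by simp
  qed
  finally show "quantum_bias \<Phi> ?d ?d (psi ?d) (\<lambda>x. gam K (u x)) (\<lambda>y. gam K (v y)) = (\<Sum>x\<in>UNIV. \<Sum>y\<in>UNIV. \<Phi> x y * (\<Sum>k<K. u x k * v y k))" .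
qed


lemma sum_sumtype: "(\<Sum>i\<in>(UNIV :: ('a::finite + 'b::finite) set). g i) = (\<Sum>x\<in>UNIV. g (Inl x)) + (\<Sum>y\<in>UNIV. g (Inr y))"
proof -
  have "(\<Sum>i\<in>(UNIV :: ('a + 'b) set). g i) = sum g (UNIV <+> UNIV)" by (simp only: UNIV_Plus_UNIV)
  also have "\<dots> = sum (g \<circ> Inl) UNIV + sum (g \<circ> Inr) UNIV" by (rule sum.Plus) simp_all
  finally show ?thesis by simp
qed

definition qf :: "('x::finite \<Rightarrow> 'y::finite \<Rightarrow> real) \<Rightarrow> ('x + 'y \<Rightarrow> real) \<Rightarrow> ('x \<Rightarrow> real) \<Rightarrow> ('y \<Rightarrow> real) \<Rightarrow> real" where
  "qf \<Phi> lam a b = (\<Sum>x\<in>UNIV. lam (Inl x) / 2 * (a x)^2) + (\<Sum>y\<in>UNIV. lam (Inr y) / 2 * (b y)^2)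
     - (\<Sum>x\<in>UNIV. \<Sum>y\<in>UNIV. \<Phi> x y * a x * b y)"

lemma quad_eq:
  fixes \<Phi> :: "'x::finite \<Rightarrow> 'y::finite \<Rightarrow> real"
  shows "(\<Sum>i\<in>UNIV. \<Sum>j\<in>UNIV. v i * ((if i = j then lam i / 2 else 0) - tPhi \<Phi> i j) * v j)
    = qf \<Phi> lam (\<lambda>x. v (Inl x)) (\<lambda>y. v (Inr y))"
proof -
  have "(\<Sum>i\<in>UNIV. \<Sum>j\<in>UNIV. v i * ((if i = j then lam i / 2 else 0) - tPhi \<Phi> i j) * v j)
     = (\<Sum>i\<in>UNIV. \<Sum>j\<in>UNIV. (if i = j then lam i / 2 * (v i)^2 else 0)) - (\<Sum>i\<in>UNIV. \<Sum>j\<in>UNIV. v i * tPhi \<Phi> i j * v j)"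
  proof -
    have "(\<Sum>i\<in>UNIV. \<Sum>j\<in>UNIV. v i * ((if i = j then lam i / 2 else 0) - tPhi \<Phi> i j) * v j)
      = (\<Sum>i\<in>UNIV. \<Sum>j\<in>UNIV. (if i = j then lam i / 2 * (v i)^2 else 0) - v i * tPhi \<Phi> i j * v j)"
      by (intro sum.cong refl) (auto simp: power2_eq_square algebra_simps)
    then show ?thesis by (simp only: sum_subtractf)
  qed
  also have "(\<Sum>i\<in>UNIV. \<Sum>j\<in>UNIV. (if i = j then lam i / 2 * (v i)^2 else 0)) = (\<Sum>i\<in>UNIV. lam i / 2 * (v i)^2)"
    by simp
  also have "\<dots> = (\<Sum>x\<in>UNIV. lam (Inl x) / 2 * (v (Inl x))^2) + (\<Sum>y\<in>UNIV. lam (Inr y) / 2 * (v (Inr y))^2)"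
    by (rule sum_sumtype)
  also have "(\<Sum>i\<in>UNIV. \<Sum>j\<in>UNIV. v i * tPhi \<Phi> i j * v j) =
      (\<Sum>x\<in>UNIV. \<Sum>y\<in>UNIV. v (Inl x) * (\<Phi> x y / 2) * v (Inr y)) + (\<Sum>y\<in>UNIV. \<Sum>x\<in>UNIV. v (Inr y) * (\<Phi> x y / 2) * v (Inl x))"
    by (simp add: sum_sumtype tPhi_def)
  also have "(\<Sum>y\<in>UNIV. \<Sum>x\<in>UNIV. v (Inr y) * (\<Phi> x y / 2) * v (Inl x)) = (\<Sum>x\<in>UNIV. \<Sum>y\<in>UNIV. v (Inl x) * (\<Phi> x y / 2) * v (Inr y))"
    by (subst sum.swap) (simp add: mult_ac)
  also have "(\<Sum>x\<in>UNIV. \<Sum>y\<in>UNIV. v (Inl x) * (\<Phi> x y / 2) * v (Inr y)) + (\<Sum>x\<in>UNIV. \<Sum>y\<in>UNIV. v (Inl x) * (\<Phi> x y / 2) * v (Inr y))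
     = (\<Sum>x\<in>UNIV. \<Sum>y\<in>UNIV. \<Phi> x y * v (Inl x) * v (Inr y))"
    by (simp add: sum.distrib[symmetric] mult_ac)
  finally show ?thesis unfolding qf_def by simp
qed

lemma feas_iff: "dual_feasible \<Phi> lam \<longleftrightarrow> (\<forall>a b. 0 \<le> qf \<Phi> lam a b)"
proof
  assume F: "dual_feasible \<Phi> lam"
  show "\<forall>a b. 0 \<le> qf \<Phi> lam a b"
  proof (intro allI)
    fix a b
    have "0 \<le> (\<Sum>i\<in>UNIV. \<Sum>j\<in>UNIV. case_sum a b i * ((if i = j then lam i / 2 else 0) - tPhi \<Phi> i j) * case_sum a b j)"
      using F unfolding dual_feasible_def by blast
    then show "0 \<le> qf \<Phi> lam a b" unfolding quad_eq by simp
  qed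
next
  assume Q: "\<forall>a b. 0 \<le> qf \<Phi> lam a b"
  show "dual_feasible \<Phi> lam" unfolding dual_feasible_def quad_eq using Q by blast
qed

lemma dual_obj_split: "dual_obj lam = ((\<Sum>x\<in>UNIV. lam (Inl x)) + (\<Sum>y\<in>UNIV. lam (Inr y))) / 2"
  unfolding dual_obj_def by (simp add: sum_sumtype)

lemma gram_ineq:
  fixes \<Phi> :: "'x::finite \<Rightarrow> 'y::finite \<Rightarrow> real"
  assumes F: "dual_feasible \<Phi> lam" and p: "\<And>x. dim_vec (p x) = n" and q: "\<And>y. dim_vec (q y) = n"
  shows "(\<Sum>x\<in>UNIV. \<Sum>y\<in>UNIV. \<Phi> x y * Re (cinner (p x) (q y))) \<le>
     (\<Sum>x\<in>UNIV. lam (Inl x) / 2 * Re (cinner (p x) (p x))) + (\<Sum>y\<in>UNIV. lam (Inr y) / 2 * Re (cinner (q y) (q y)))"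
proof -
  have Q: "\<And>a b. 0 \<le> qf \<Phi> lam a b" using F feas_iff by blast
  define ra where "ra k x = Re (p x $ k)" for k x
  define ia where "ia k x = Im (p x $ k)" for k x
  define rb where "rb k y = Re (q y $ k)" for k y
  define ib where "ib k y = Im (q y $ k)" for k y
  have "0 \<le> (\<Sum>k<n. qf \<Phi> lam (ra k) (rb k) + qf \<Phi> lam (ia k) (ib k))"
    using Q by (intro sum_nonneg add_nonneg_nonneg) auto
  also have "\<dots> = (\<Sum>x\<in>UNIV. lam (Inl x) / 2 * Re (cinner (p x) (p x))) + (\<Sum>y\<in>UNIV. lam (Inr y) / 2 * Re (cinner (q y) (q y)))
     - (\<Sum>x\<in>UNIV. \<Sum>y\<in>UNIV. \<Phi> x y * Re (cinner (p x) (q y)))"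
    unfolding qf_def Re_cinner[OF p] Re_cinner[OF q] ra_def ia_def rb_def ib_def
    by (simp add: sum.distrib sum_subtractf sum_distrib_left sum.swap[where B="{..<n}"] algebra_simps power2_eq_square)
  finally show ?thesis by simp
qed


lemma strategy_facts:
  assumes S: "quantum_strategy dA dB \<psi> A B"
  shows "\<psi> \<in> carrier_vec (dA*dB)" "cinner \<psi> \<psi> = 1"
    "\<And>x. A x \<in> carrier_mat dA dA" "\<And>y. B y \<in> carrier_mat dB dB"
    "\<And>x. herm_mat (dA*dB) (lift_A dA dB (A x))" "\<And>y. herm_mat (dA*dB) (lift_B dA dB (B y))"
    "\<And>x. lift_A dA dB (A x) * lift_A dA dB (A x) = 1\<^sub>m (dA*dB)"
    "\<And>y. lift_B dA dB (B y) * lift_B dA dB (B y) = 1\<^sub>m (dA*dB)"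
proof -
  have oA: "\<And>x. obs_mat dA (A x)" and oB: "\<And>y. obs_mat dB (B y)"
    using S unfolding quantum_strategy_def by auto
  have hA: "\<And>x. herm_mat dA (A x)" and hB: "\<And>y. herm_mat dB (B y)"
    using oA oB unfolding obs_mat_def by auto
  show cA: "\<And>x. A x \<in> carrier_mat dA dA" using hA unfolding herm_mat_def by auto
  show cB: "\<And>y. B y \<in> carrier_mat dB dB" using hB unfolding herm_mat_def by auto
  show "\<psi> \<in> carrier_vec (dA*dB)" "cinner \<psi> \<psi> = 1" using S unfolding quantum_strategy_def by auto
  show "\<And>x. herm_mat (dA*dB) (lift_A dA dB (A x))" using hA by (rule herm_lift_A)
  show "\<And>y. herm_mat (dA*dB) (lift_B dA dB (B y))" using hB by (rule herm_lift_B)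
  show "\<And>x. lift_A dA dB (A x) * lift_A dA dB (A x) = 1\<^sub>m (dA*dB)"
    using cA oA unfolding obs_mat_def by (intro lift_AA) auto
  show "\<And>y. lift_B dA dB (B y) * lift_B dA dB (B y) = 1\<^sub>m (dA*dB)"
    using cB oB unfolding obs_mat_def by (intro lift_BB) auto
qed

lemma unit_after_obs:
  assumes H: "herm_mat n M" and MM: "M * M = 1\<^sub>m n" and psi: "\<psi> \<in> carrier_vec n" and u: "cinner \<psi> \<psi> = 1"
  shows "cinner (M *\<^sub>v \<psi>) (M *\<^sub>v \<psi>) = 1"
proof -
  have M: "M \<in> carrier_mat n n" using H herm_mat_def by auto
  have "cinner (M *\<^sub>v \<psi>) (M *\<^sub>v \<psi>) = cinner \<psi> (M *\<^sub>v (M *\<^sub>v \<psi>))"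
    using cinner_herm[OF H, of "M *\<^sub>v \<psi>" \<psi>] M psi by simp
  also have "M *\<^sub>v (M *\<^sub>v \<psi>) = \<psi>"
    using M psi MM by (metis assoc_mult_mat_vec one_mult_mat_vec)
  finally show ?thesis using u by simp
qed

lemma weak_duality:
  fixes \<Phi> :: "'x::finite \<Rightarrow> 'y::finite \<Rightarrow> real"
  assumes F: "dual_feasible \<Phi> lam" and S: "quantum_strategy dA dB \<psi> A B"
  shows "quantum_bias \<Phi> dA dB \<psi> A B \<le> dual_obj lam"
proof -
  note sf = strategy_facts[OF S]
  let ?n = "dA*dB"
  define p where "p x = lift_A dA dB (A x) *\<^sub>v \<psi>" for x
  define q where "q y = lift_B dA dB (B y) *\<^sub>v \<psi>" for y
  have LA: "\<And>x. lift_A dA dB (A x) \<in> carrier_mat ?n ?n" using sf(3) by (rule lift_A_carrier)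
  have LB: "\<And>y. lift_B dA dB (B y) \<in> carrier_mat ?n ?n" using sf(4) by (rule lift_B_carrier)
  have pd: "dim_vec (p x) = ?n" for x unfolding p_def using LA[of x] by simp
  have qd: "dim_vec (q y) = ?n" for y unfolding q_def using LB[of y] by simp
  have qc: "q y \<in> carrier_vec ?n" for y unfolding q_def using LB[of y] sf(1) by simp
  have "quantum_bias \<Phi> dA dB \<psi> A B = (\<Sum>x\<in>UNIV. \<Sum>y\<in>UNIV. \<Phi> x y *
     Re (cinner \<psi> ((lift_A dA dB (A x) * lift_B dA dB (B y)) *\<^sub>v \<psi>)))"
    by (rule bias_expand[OF sf(3) sf(4) sf(1)])
  also have "\<dots> = (\<Sum>x\<in>UNIV. \<Sum>y\<in>UNIV. \<Phi> x y * Re (cinner (p x) (q y)))"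
  proof (intro sum.cong refl)
    fix x y
    have "(lift_A dA dB (A x) * lift_B dA dB (B y)) *\<^sub>v \<psi> = lift_A dA dB (A x) *\<^sub>v q y"
      unfolding q_def using LA LB sf(1) by (metis assoc_mult_mat_vec)
    moreover have "cinner \<psi> (lift_A dA dB (A x) *\<^sub>v q y) = cinner (p x) (q y)"
      unfolding p_def by (rule cinner_herm[OF sf(5) qc sf(1)])
    ultimately show "\<Phi> x y * Re (cinner \<psi> ((lift_A dA dB (A x) * lift_B dA dB (B y)) *\<^sub>v \<psi>)) =
      \<Phi> x y * Re (cinner (p x) (q y))" by simp
  qed
  also have "\<dots> \<le> (\<Sum>x\<in>UNIV. lam (Inl x) / 2 * Re (cinner (p x) (p x))) + (\<Sum>y\<in>UNIV. lam (Inr y) / 2 * Re (cinner (q y) (q y)))"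
    by (rule gram_ineq[OF F pd qd])
  also have "\<dots> = (\<Sum>x\<in>UNIV. lam (Inl x) / 2) + (\<Sum>y\<in>UNIV. lam (Inr y) / 2)"
    unfolding p_def q_def using unit_after_obs[OF sf(5) sf(7) sf(1) sf(2)] unit_after_obs[OF sf(6) sf(8) sf(1) sf(2)]
    by simp
  also have "\<dots> = dual_obj lam" unfolding dual_obj_split sum_divide_distrib[symmetric] by (simp add: add_divide_distrib)
  finally show ?thesis .
qed

lemma schur:
  fixes \<Phi> :: "'x::finite \<Rightarrow> 'y::finite \<Rightarrow> real"
  assumes F: "dual_feasible \<Phi> lam" and pos: "\<And>x. 0 < lam (Inl x)"
  shows "(\<Sum>x\<in>UNIV. (\<Sum>y\<in>UNIV. \<Phi> x y * r y)^2 / lam (Inl x)) \<le> (\<Sum>y\<in>UNIV. lam (Inr y) * (r y)^2)"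
proof -
  define s where "s x = (\<Sum>y\<in>UNIV. \<Phi> x y * r y)" for x
  define a where "a x = s x / lam (Inl x)" for x
  have "0 \<le> qf \<Phi> lam a r" using F feas_iff by blast
  moreover have "(\<Sum>x\<in>UNIV. lam (Inl x) / 2 * (a x)^2) = (\<Sum>x\<in>UNIV. (s x)^2 / lam (Inl x)) / 2"
    unfolding a_def sum_divide_distrib
    by (intro sum.cong refl) (use pos in \<open>simp add: power2_eq_square field_simps\<close>)
  moreover have "(\<Sum>x\<in>UNIV. \<Sum>y\<in>UNIV. \<Phi> x y * a x * r y) = (\<Sum>x\<in>UNIV. (s x)^2 / lam (Inl x))"
  proof (intro sum.cong refl)
    fix x
    have "(\<Sum>y\<in>UNIV. \<Phi> x y * a x * r y) = a x * s x"
      unfolding s_def by (simp add: sum_distrib_left mult_ac)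
    then show "(\<Sum>y\<in>UNIV. \<Phi> x y * a x * r y) = (s x)^2 / lam (Inl x)"
      unfolding a_def by (simp add: power2_eq_square)
  qed
  moreover have "(\<Sum>y\<in>UNIV. lam (Inr y) / 2 * (r y)^2) = (\<Sum>y\<in>UNIV. lam (Inr y) * (r y)^2) / 2"
    by (simp add: sum_divide_distrib)
  ultimately show ?thesis unfolding qf_def s_def by linarith
qed

lemma lam_y_nonneg: assumes F: "dual_feasible \<Phi> lam" shows "0 \<le> lam (Inr y)"
proof -
  have "0 \<le> qf \<Phi> lam (\<lambda>_. 0) (\<lambda>y'. if y' = y then 1 else 0)" using F feas_iff by blast
  also have "qf \<Phi> lam (\<lambda>_. 0) (\<lambda>y'. if y' = y then 1 else 0) = lam (Inr y) / 2"
  proof -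
    have e: "(\<Sum>y'\<in>UNIV. lam (Inr y') / 2 * (if y' = y then 1 else 0)^2) = lam (Inr y) / 2"
      by (subst sum.cong[OF refl, where h="\<lambda>y'. if y' = y then lam (Inr y) / 2 else 0"]) auto
    show ?thesis unfolding qf_def e by simp
  qed
  finally show ?thesis by simp
qed

definition scl :: "real \<Rightarrow> ('x + 'y \<Rightarrow> real) \<Rightarrow> 'x + 'y \<Rightarrow> real" where
  "scl t lam i = (case i of Inl x \<Rightarrow> t * lam (Inl x) | Inr y \<Rightarrow> lam (Inr y) / t)"

lemma feas_scale: assumes F: "dual_feasible \<Phi> lam" and t: "0 < t"
  shows "dual_feasible \<Phi> (scl t lam)"
  unfolding feas_iff
proof (intro allI)
  fix a b
  have st: "sqrt t * sqrt t = t" using t by simp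
  have stp: "sqrt t > 0" using t by simp
  have "0 \<le> qf \<Phi> lam (\<lambda>x. sqrt t * a x) (\<lambda>y. b y / sqrt t)" using F feas_iff by blast
  also have "qf \<Phi> lam (\<lambda>x. sqrt t * a x) (\<lambda>y. b y / sqrt t) = qf \<Phi> (scl t lam) a b"
    unfolding qf_def scl_def
  proof -
    have e1: "(\<Sum>x\<in>UNIV. lam (Inl x) / 2 * (sqrt t * a x)^2) = (\<Sum>x\<in>UNIV. (case Inl x of Inl x \<Rightarrow> t * lam (Inl x) | Inr y \<Rightarrow> lam (Inr y) / t) / 2 * (a x)^2)"
      using t by (intro sum.cong refl) (simp add: power_mult_distrib mult_ac)
    have e2: "(\<Sum>y\<in>UNIV. lam (Inr y) / 2 * (b y / sqrt t)^2) = (\<Sum>y\<in>UNIV. (case Inr y of Inl x \<Rightarrow> t * lam (Inl x) | Inr y \<Rightarrow> lam (Inr y) / t) / 2 * (b y)^2)"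
      using t by (intro sum.cong refl) (simp add: power_divide)
    have e3: "(\<Sum>x\<in>UNIV. \<Sum>y\<in>UNIV. \<Phi> x y * (sqrt t * a x) * (b y / sqrt t)) = (\<Sum>x\<in>UNIV. \<Sum>y\<in>UNIV. \<Phi> x y * a x * b y)"
      using stp by (intro sum.cong refl) (simp add: field_simps)
    show "(\<Sum>x\<in>UNIV. lam (Inl x) / 2 * (sqrt t * a x)\<^sup>2) + (\<Sum>y\<in>UNIV. lam (Inr y) / 2 * (b y / sqrt t)\<^sup>2) -
      (\<Sum>x\<in>UNIV. \<Sum>y\<in>UNIV. \<Phi> x y * (sqrt t * a x) * (b y / sqrt t)) =
      (\<Sum>x\<in>UNIV. (case Inl x of Inl x \<Rightarrow> t * lam (Inl x) | Inr y \<Rightarrow> lam (Inr y) / t) / 2 * (a x)\<^sup>2) +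
      (\<Sum>y\<in>UNIV. (case Inr y of Inl x \<Rightarrow> t * lam (Inl x) | Inr y \<Rightarrow> lam (Inr y) / t) / 2 * (b y)\<^sup>2) -
      (\<Sum>x\<in>UNIV. \<Sum>y\<in>UNIV. \<Phi> x y * a x * b y)"
      unfolding e1 e2 e3 ..
  qed
  finally show "0 \<le> qf \<Phi> (scl t lam) a b" .
qed

lemma balance:
  fixes \<Phi> :: "'x::finite \<Rightarrow> 'y::finite \<Rightarrow> real"
  assumes O: "dual_optimal \<Phi> lam" and pos: "\<And>x. 0 < lam (Inl x)"
  shows "(\<Sum>x\<in>UNIV. lam (Inl x)) = (\<Sum>y\<in>UNIV. lam (Inr y))"
proof -
  have F: "dual_feasible \<Phi> lam" using O dual_optimal_def by blast
  define A where "A = (\<Sum>x\<in>UNIV. lam (Inl x))"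
  define B where "B = (\<Sum>y\<in>UNIV. lam (Inr y))"
  have Apos: "0 < A" unfolding A_def using pos by (intro sum_pos) auto
  have Bnn: "0 \<le> B" unfolding B_def using lam_y_nonneg[OF F] by (intro sum_nonneg) auto
  have key: "A + B \<le> t * A + B / t" if t: "0 < t" for t
  proof -
    have le: "dual_obj lam \<le> dual_obj (scl t lam)"
      using O feas_scale[OF F t] unfolding dual_optimal_def by blast
    have e1: "dual_obj (scl t lam) = (t * A + B / t) / 2"
      unfolding dual_obj_split scl_def A_def B_def by (simp add: sum_distrib_left sum_divide_distrib)
    have e2: "dual_obj lam = (A + B) / 2" unfolding dual_obj_split A_def B_def ..
    from le have "(A + B) / 2 \<le> (t * A + B / t) / 2" unfolding e1 e2 .
    moreover have "\<And>a b::real. a/2 \<le> b/2 \<Longrightarrow> a \<le> b" by simp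
    ultimately show ?thesis by blast
  qed
  define t where "t = (A + B) / (2 * A)"
  have tpos: "0 < t" unfolding t_def using Apos Bnn by simp
  have h: "A + B \<le> t * A + B / t" by (rule key[OF tpos])
  have tA: "t * A = (A + B) / 2" unfolding t_def using Apos by simp
  have Bt: "B / t = 2 * A * B / (A + B)" unfolding t_def using Apos Bnn by (simp add: field_simps)
  have h2: "A + B \<le> (A + B) / 2 + 2 * A * B / (A + B)" using h unfolding tA Bt .
  have gen: "\<And>S X::real. S \<le> S / 2 + X \<Longrightarrow> S / 2 \<le> X" by linarith
  have "(A + B) / 2 \<le> 2 * A * B / (A + B)" using gen[OF h2] .
  moreover have "0 < A + B" using Apos Bnn by simp
  ultimately have "(A + B) / 2 * (A + B) \<le> 2 * A * B" by (simp add: pos_le_divide_eq)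
  then have "(A + B) * (A + B) \<le> 4 * A * B" by simp
  then have "(A - B)^2 \<le> 0" by (simp add: power2_eq_square algebra_simps)
  then have "A = B" by simp
  then show ?thesis unfolding A_def B_def .
qed


lemma sum_option: "(\<Sum>j\<in>(UNIV :: ('a::finite) option set). g j) = g None + (\<Sum>i\<in>UNIV. g (Some i))"
proof -
  have "(\<Sum>j\<in>(UNIV :: 'a option set). g j) = sum g (insert None (range Some))"
    by (metis UNIV_option_conv)
  also have "\<dots> = g None + sum g (range Some)" by (rule sum.insert) auto
  also have "sum g (range Some) = (\<Sum>i\<in>UNIV. g (Some i))" by (simp add: sum.reindex)
  finally show ?thesis .
qed

definition phiv :: "('x::finite \<Rightarrow> 'y::finite \<Rightarrow> real) \<Rightarrow> real^('x+'y) \<Rightarrow> real^(('x+'y) option)" where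
  "phiv \<Phi> v = (\<chi> j. case j of None \<Rightarrow> (\<Sum>x\<in>UNIV. \<Sum>y\<in>UNIV. \<Phi> x y * vec_nth v (Inl x) * vec_nth v (Inr y))
                           | Some i \<Rightarrow> (vec_nth v i)^2)"

lemma phiv_cont: "continuous_on UNIV (phiv \<Phi>)"
  unfolding phiv_def
proof (rule continuous_on_vec_lambda)
  fix j :: "('a + 'b) option"
  show "continuous_on UNIV (\<lambda>v. case j of None \<Rightarrow> (\<Sum>x\<in>UNIV. \<Sum>y\<in>UNIV. \<Phi> x y * vec_nth v (Inl x) * vec_nth v (Inr y))
                           | Some i \<Rightarrow> (vec_nth v i)^2)"
    by (cases j) (auto intro!: continuous_intros)
qed

lemma inner_phiv: "inner a (phiv \<Phi> v) = vec_nth a None * (\<Sum>x\<in>UNIV. \<Sum>y\<in>UNIV. \<Phi> x y * vec_nth v (Inl x) * vec_nth v (Inr y))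
    + (\<Sum>i\<in>UNIV. vec_nth a (Some i) * (vec_nth v i)^2)"
  unfolding inner_vec_def phiv_def by (simp add: sum_option)

lemma norm_sq_vec: "(norm (v :: real^'n))^2 = (\<Sum>i\<in>UNIV. (vec_nth v i)^2)"
  unfolding power2_norm_eq_inner inner_vec_def by (simp add: power2_eq_square)

lemma quad_from_sep:
  fixes \<Phi> :: "'x::finite \<Rightarrow> 'y::finite \<Rightarrow> real"
  assumes sep: "\<And>w. w \<in> sphere (0::real^('x+'y)) 1 \<Longrightarrow> b < inner a (phiv \<Phi> w)"
  shows "0 \<le> (\<Sum>i\<in>UNIV. (vec_nth a (Some i) - b) * (f i)^2) + vec_nth a None * (\<Sum>x\<in>UNIV. \<Sum>y\<in>UNIV. \<Phi> x y * f (Inl x) * f (Inr y))"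
proof (cases "\<forall>i. f i = 0")
  case True then show ?thesis by simp
next
  case False
  define v :: "real^('x+'y)" where "v = (\<chi> i. f i)"
  have vf: "vec_nth v i = f i" for i unfolding v_def by simp
  have vnz: "v \<noteq> 0" using False vf by (metis zero_index)
  define c where "c = norm v"
  have cpos: "0 < c" unfolding c_def using vnz by simp
  define w where "w = (1/c) *\<^sub>R v"
  have ws: "w \<in> sphere 0 1" unfolding w_def c_def using vnz by simp
  define g where "g i = vec_nth w i" for i
  have fg: "f i = c * g i" for i unfolding g_def w_def using cpos by (simp add: vf)
  define P where "P h = vec_nth a None * (\<Sum>x\<in>UNIV. \<Sum>y\<in>UNIV. \<Phi> x y * h (Inl x) * h (Inr y))
      + (\<Sum>i\<in>UNIV. vec_nth a (Some i) * (h i)^2)" for h :: "'x + 'y \<Rightarrow> real"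
  have "b < inner a (phiv \<Phi> w)" by (rule sep[OF ws])
  also have "inner a (phiv \<Phi> w) = P g" unfolding inner_phiv P_def g_def ..
  finally have bP: "b < P g" .
  have g1: "(\<Sum>i\<in>UNIV. (g i)^2) = 1"
    using ws unfolding g_def norm_sq_vec[symmetric] by simp
  have e1: "(\<Sum>x\<in>UNIV. \<Sum>y\<in>UNIV. \<Phi> x y * f (Inl x) * f (Inr y)) = c^2 * (\<Sum>x\<in>UNIV. \<Sum>y\<in>UNIV. \<Phi> x y * g (Inl x) * g (Inr y))"
    unfolding fg sum_distrib_left by (intro sum.cong refl) (simp add: power2_eq_square mult_ac)
  have e2: "(\<Sum>i\<in>UNIV. vec_nth a (Some i) * (f i)^2) = c^2 * (\<Sum>i\<in>UNIV. vec_nth a (Some i) * (g i)^2)"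
    unfolding fg sum_distrib_left by (intro sum.cong refl) (simp add: power_mult_distrib mult_ac)
  have e3: "(\<Sum>i\<in>UNIV. (f i)^2) = c^2"
    unfolding fg power_mult_distrib sum_distrib_left[symmetric] g1 by simp
  have "(\<Sum>i\<in>UNIV. (vec_nth a (Some i) - b) * (f i)^2) + vec_nth a None * (\<Sum>x\<in>UNIV. \<Sum>y\<in>UNIV. \<Phi> x y * f (Inl x) * f (Inr y))
     = P f - b * (\<Sum>i\<in>UNIV. (f i)^2)"
    unfolding P_def by (simp add: left_diff_distrib sum_subtractf sum_distrib_left)
  also have "\<dots> = c^2 * (P g - b)"
    unfolding e3 P_def e1 e2 by (simp add: algebra_simps)
  finally show ?thesis using bP cpos by simp
qed


definition zvec :: "real \<Rightarrow> real^(('x::finite + 'y::finite) option)" where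
  "zvec D = (\<chi> j. case j of None \<Rightarrow> D / real CARD('x + 'y) | Some i \<Rightarrow> 1 / real CARD('x + 'y))"

lemma z_notin:
  fixes \<Phi> :: "'x::finite \<Rightarrow> 'y::finite \<Rightarrow> real"
  assumes H: "\<And>K (w :: 'x + 'y \<Rightarrow> nat \<Rightarrow> real). (\<And>i. (\<Sum>k<K. (w i k)^2) = 1) \<Longrightarrow>
      (\<Sum>x\<in>UNIV. \<Sum>y\<in>UNIV. \<Phi> x y * (\<Sum>k<K. w (Inl x) k * w (Inr y) k)) \<le> \<xi>"
    and D: "\<xi> < D"
  shows "(zvec D :: real^(('x + 'y) option)) \<notin> convex hull (phiv \<Phi> ` sphere 0 1)"
proof
  let ?z = "zvec D :: real^(('x + 'y) option)"
  define N where "N = real CARD('x + 'y)"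
  have Npos: "0 < N" unfolding N_def of_nat_0_less_iff by (rule finite_UNIV_card_ge_0) simp
  assume "?z \<in> convex hull (phiv \<Phi> ` sphere 0 1)"
  then obtain S u where fin: "finite S" and sub: "S \<subseteq> phiv \<Phi> ` sphere 0 1" and nn: "\<forall>x\<in>S. 0 \<le> u x"
    and su: "sum u S = 1" and comb: "(\<Sum>v\<in>S. u v *\<^sub>R v) = ?z"
    unfolding convex_hull_explicit by blast
  obtain h where hb: "bij_betw h {0..<card S} S" using ex_bij_betw_nat_finite[OF fin] by blast
  have "\<forall>p\<in>S. \<exists>v. v \<in> sphere 0 1 \<and> p = phiv \<Phi> v" using sub by blast
  then obtain V where V: "\<And>p. p \<in> S \<Longrightarrow> V p \<in> sphere 0 1 \<and> p = phiv \<Phi> (V p)" by metis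
  have comp: "vec_nth ?z j = (\<Sum>p\<in>S. u p * vec_nth p j)" for j
    unfolding comb[symmetric] by (simp add: sum_component)
  define m where "m = card S"
  have zS: "vec_nth ?z (Some i) = 1 / N" for i unfolding zvec_def N_def by simp
  have zN: "vec_nth ?z None = D / N" unfolding zvec_def N_def by simp
  define w where "w i k = sqrt (N * u (h k)) * vec_nth (V (h k)) i" for i k
  have hS: "k < m \<Longrightarrow> h k \<in> S" for k using hb unfolding m_def bij_betw_def by auto
  have wsq: "w i k * w j k = N * u (h k) * (vec_nth (V (h k)) i * vec_nth (V (h k)) j)" if k: "k < m" for i j k
  proof -
    have "0 \<le> N * u (h k)" using Npos nn hS[OF k] by simp
    then have "sqrt (N * u (h k)) * sqrt (N * u (h k)) = N * u (h k)" by simp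
    then show ?thesis unfolding w_def by (simp add: algebra_simps)
  qed
  have reidx: "(\<Sum>k<m. g (h k)) = (\<Sum>p\<in>S. g p)" for g :: "real^(('x + 'y) option) \<Rightarrow> real"
    unfolding m_def lessThan_atLeast0 by (rule sum.reindex_bij_betw[OF hb])
  have unit: "(\<Sum>k<m. (w i k)^2) = 1" for i
  proof -
    have "(\<Sum>k<m. (w i k)^2) = (\<Sum>k<m. N * u (h k) * (vec_nth (V (h k)) i)^2)"
      by (intro sum.cong refl) (simp add: power2_eq_square wsq)
    also have "\<dots> = (\<Sum>p\<in>S. N * u p * (vec_nth (V p) i)^2)" by (rule reidx)
    also have "\<dots> = N * (\<Sum>p\<in>S. u p * vec_nth p (Some i))"
      unfolding sum_distrib_left
    proof (intro sum.cong refl)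
      fix p assume p: "p \<in> S"
      have pv: "phiv \<Phi> (V p) = p" using V[OF p] by simp
      have "vec_nth (phiv \<Phi> (V p)) (Some i) = (vec_nth (V p) i)^2" by (simp add: phiv_def)
      then have "vec_nth p (Some i) = (vec_nth (V p) i)^2" by (simp only: pv)
      then show "N * u p * (vec_nth (V p) i)^2 = N * (u p * vec_nth p (Some i))" by simp
    qed
    also have "\<dots> = N * vec_nth ?z (Some i)" unfolding comp ..
    also have "\<dots> = 1" unfolding zS using Npos by simp
    finally show ?thesis .
  qed
  have "(\<Sum>x\<in>UNIV. \<Sum>y\<in>UNIV. \<Phi> x y * (\<Sum>k<m. w (Inl x) k * w (Inr y) k)) \<le> \<xi>"
    by (rule H) (rule unit)
  moreover have "(\<Sum>x\<in>UNIV. \<Sum>y\<in>UNIV. \<Phi> x y * (\<Sum>k<m. w (Inl x) k * w (Inr y) k)) = D"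
  proof -
    have "(\<Sum>x\<in>UNIV. \<Sum>y\<in>UNIV. \<Phi> x y * (\<Sum>k<m. w (Inl x) k * w (Inr y) k))
      = (\<Sum>x\<in>UNIV. \<Sum>y\<in>UNIV. \<Sum>k<m. N * u (h k) * (\<Phi> x y * vec_nth (V (h k)) (Inl x) * vec_nth (V (h k)) (Inr y)))"
      unfolding sum_distrib_left by (intro sum.cong refl) (simp add: wsq mult_ac)
    also have "\<dots> = (\<Sum>k<m. N * u (h k) * (\<Sum>x\<in>UNIV. \<Sum>y\<in>UNIV. \<Phi> x y * vec_nth (V (h k)) (Inl x) * vec_nth (V (h k)) (Inr y)))"
      unfolding sum_distrib_left by (simp only: sum.swap[where B="{..<m}"])
    also have "\<dots> = (\<Sum>p\<in>S. N * u p * (\<Sum>x\<in>UNIV. \<Sum>y\<in>UNIV. \<Phi> x y * vec_nth (V p) (Inl x) * vec_nth (V p) (Inr y)))"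
      by (rule reidx)
    also have "\<dots> = (\<Sum>p\<in>S. N * (u p * vec_nth p None))"
    proof (rule sum.cong[OF refl])
      fix p assume p: "p \<in> S"
      have pv: "phiv \<Phi> (V p) = p" using V[OF p] by simp
      have "vec_nth (phiv \<Phi> (V p)) None = (\<Sum>x\<in>UNIV. \<Sum>y\<in>UNIV. \<Phi> x y * vec_nth (V p) (Inl x) * vec_nth (V p) (Inr y))"
        by (simp add: phiv_def)
      then have "vec_nth p None = (\<Sum>x\<in>UNIV. \<Sum>y\<in>UNIV. \<Phi> x y * vec_nth (V p) (Inl x) * vec_nth (V p) (Inr y))"
        by (simp only: pv)
      then show "N * u p * (\<Sum>x\<in>UNIV. \<Sum>y\<in>UNIV. \<Phi> x y * vec_nth (V p) (Inl x) * vec_nth (V p) (Inr y)) = N * (u p * vec_nth p None)"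
        by simp
    qed
    also have "\<dots> = N * vec_nth ?z None" unfolding comp by (simp add: sum_distrib_left)
    also have "\<dots> = D" unfolding zN using Npos by simp
    finally show ?thesis .
  qed
  ultimately show False using D by simp
qed


lemma lower_bound:
  fixes \<Phi> :: "'x::finite \<Rightarrow> 'y::finite \<Rightarrow> real"
  assumes O: "dual_optimal \<Phi> lam"
    and H: "\<And>K (w :: 'x + 'y \<Rightarrow> nat \<Rightarrow> real). (\<And>i. (\<Sum>k<K. (w i k)^2) = 1) \<Longrightarrow>
      (\<Sum>x\<in>UNIV. \<Sum>y\<in>UNIV. \<Phi> x y * (\<Sum>k<K. w (Inl x) k * w (Inr y) k)) \<le> \<xi>"
  shows "dual_obj lam \<le> \<xi>"
proof (rule ccontr)
  assume "\<not> dual_obj lam \<le> \<xi>"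
  then have xD: "\<xi> < dual_obj lam" by simp
  define SP where "SP = (\<Sum>x\<in>UNIV. \<Sum>y\<in>UNIV. \<Phi> x y)"
  have sig: "\<sigma> * SP \<le> \<xi>" if s: "\<sigma> = 1 \<or> \<sigma> = -1" for \<sigma> :: real
  proof -
    define w :: "'x + 'y \<Rightarrow> nat \<Rightarrow> real" where "w i k = (case i of Inl _ \<Rightarrow> 1 | Inr _ \<Rightarrow> \<sigma>)" for i k
    have "(\<Sum>x\<in>UNIV. \<Sum>y\<in>UNIV. \<Phi> x y * (\<Sum>k<1. w (Inl x) k * w (Inr y) k)) \<le> \<xi>"
    proof (rule H)
      fix i show "(\<Sum>k<1. (w i k)^2) = 1" using s by (cases i) (auto simp: w_def)
    qed
    moreover have "(\<Sum>x\<in>UNIV. \<Sum>y\<in>UNIV. \<Phi> x y * (\<Sum>k<1. w (Inl x) k * w (Inr y) k)) = \<sigma> * SP"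
      unfolding SP_def w_def by (simp add: sum_distrib_left mult_ac)
    ultimately show ?thesis by simp
  qed
  have xi0: "0 \<le> \<xi>" using sig[of 1] sig[of "-1"] by simp
  define D' where "D' = (\<xi> + dual_obj lam) / 2"
  have D'1: "\<xi> < D'" and D'2: "D' < dual_obj lam" unfolding D'_def using xD by simp_all
  define C where "C = convex hull (phiv \<Phi> ` sphere (0::real^('x+'y)) 1)"
  have cC: "convex C" unfolding C_def by simp
  have clC: "closed C" unfolding C_def
    by (intro compact_imp_closed compact_convex_hull compact_continuous_image compact_sphere
        continuous_on_subset[OF phiv_cont]) simp
  have zC: "(zvec D' :: real^(('x + 'y) option)) \<notin> C" unfolding C_def by (rule z_notin[OF H D'1])
  obtain a b where ab: "inner a (zvec D' :: real^(('x + 'y) option)) < b" and abC: "\<forall>x\<in>C. b < inner a x"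
    using separating_hyperplane_closed_point[OF cC clC zC] by blast
  have sep: "b < inner a (phiv \<Phi> w)" if "w \<in> sphere (0::real^('x+'y)) 1" for w
    using abC that unfolding C_def by (meson hull_inc image_eqI)
  define \<gamma> where "\<gamma> i = vec_nth a (Some i) - b" for i
  define \<beta> where "\<beta> = vec_nth a None"
  have Q: "0 \<le> (\<Sum>i\<in>UNIV. \<gamma> i * (f i)^2) + \<beta> * (\<Sum>x\<in>UNIV. \<Sum>y\<in>UNIV. \<Phi> x y * f (Inl x) * f (Inr y))" for f
    unfolding \<gamma>_def \<beta>_def by (rule quad_from_sep[OF sep])
  define N where "N = real CARD('x + 'y)"
  have Npos: "0 < N" unfolding N_def of_nat_0_less_iff by (rule finite_UNIV_card_ge_0) simp
  have cardN: "(\<Sum>i\<in>(UNIV::('x+'y) set). c) = N * c" for c :: real unfolding N_def by simp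
  have az: "inner a (zvec D' :: real^(('x + 'y) option)) = (\<beta> * D' + (\<Sum>i\<in>UNIV. vec_nth a (Some i))) / N"
    unfolding inner_vec_def zvec_def \<beta>_def N_def by (simp add: sum_option sum_divide_distrib add_divide_distrib)
  have sg: "(\<Sum>i\<in>UNIV. \<gamma> i) + \<beta> * D' < 0"
  proof -
    have "(\<beta> * D' + (\<Sum>i\<in>UNIV. vec_nth a (Some i))) / N < b" using ab az by simp
    then have "\<beta> * D' + (\<Sum>i\<in>UNIV. vec_nth a (Some i)) < N * b" using Npos by (simp add: divide_less_eq mult.commute)
    moreover have "(\<Sum>i\<in>UNIV. \<gamma> i) = (\<Sum>i\<in>UNIV. vec_nth a (Some i)) - N * b"
      unfolding \<gamma>_def sum_subtractf cardN ..
    ultimately show ?thesis by simp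
  qed
  show False
  proof (cases "\<beta> < 0")
    case True
    define lam' where "lam' i = 2 * \<gamma> i / (- \<beta>)" for i
    have F': "dual_feasible \<Phi> lam'"
      unfolding feas_iff
    proof (intro allI)
      fix \<alpha> \<rho>
      have "0 \<le> (\<Sum>i\<in>UNIV. \<gamma> i * (case_sum \<alpha> \<rho> i)^2) + \<beta> * (\<Sum>x\<in>UNIV. \<Sum>y\<in>UNIV. \<Phi> x y * case_sum \<alpha> \<rho> (Inl x) * case_sum \<alpha> \<rho> (Inr y))"
        by (rule Q)
      also have "\<dots> = (- \<beta>) * qf \<Phi> lam' \<alpha> \<rho>"
        unfolding qf_def lam'_def sum_sumtype using True
        by (simp add: algebra_simps sum_distrib_left sum_negf)
      finally show "0 \<le> qf \<Phi> lam' \<alpha> \<rho>" using True by (simp add: mult_le_0_iff)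
    qed
    have "dual_obj lam \<le> dual_obj lam'" using O F' unfolding dual_optimal_def by blast
    also have "dual_obj lam' = (\<Sum>i\<in>UNIV. \<gamma> i) / (- \<beta>)"
    proof -
      have "(\<Sum>i\<in>UNIV. lam' i) = 2 * (\<Sum>i\<in>UNIV. \<gamma> i) / (- \<beta>)"
        unfolding lam'_def by (simp only: sum_divide_distrib[symmetric] sum_distrib_left[symmetric])
      then show ?thesis unfolding dual_obj_def by simp
    qed
    also have "\<dots> < D'"
    proof -
      have nb: "0 < - \<beta>" using True by simp
      have "(\<Sum>i\<in>UNIV. \<gamma> i) < D' * (- \<beta>)" using sg by (simp add: algebra_simps)
      then show ?thesis using pos_divide_less_eq[OF nb] by blast
    qed
    finally show False using D'2 by simp
  next
    case False
    have g0: "0 \<le> (\<Sum>i\<in>UNIV. \<gamma> i)"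
    proof (cases "\<beta> = 0")
      case True
      have "0 \<le> \<gamma> j" for j
      proof -
        have "0 \<le> (\<Sum>i\<in>UNIV. \<gamma> i * (if i = j then 1 else 0)^2)" using Q[of "\<lambda>i. if i = j then 1 else 0"] True by simp
        also have "(\<Sum>i\<in>UNIV. \<gamma> i * (if i = j then 1 else 0)^2) = \<gamma> j"
          by (subst sum.cong[OF refl, where h="\<lambda>i. if i = j then \<gamma> j else 0"]) auto
        finally show ?thesis .
      qed
      then show ?thesis by (intro sum_nonneg) auto
    next
      case False2: False
      then have bpos: "0 < \<beta>" using False by simp
      define \<sigma> :: real where "\<sigma> = (if 0 \<le> SP then -1 else 1)"
      define f :: "'x + 'y \<Rightarrow> real" where "f i = (case i of Inl _ \<Rightarrow> 1 | Inr _ \<Rightarrow> \<sigma>)" for i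
      have f2: "(f i)^2 = 1" for i unfolding f_def \<sigma>_def by (cases i) auto
      have "(\<Sum>x\<in>UNIV. \<Sum>y\<in>UNIV. \<Phi> x y * f (Inl x) * f (Inr y)) = \<sigma> * SP"
        unfolding SP_def f_def by (simp add: sum_distrib_left mult_ac)
      moreover have "\<sigma> * SP \<le> 0" unfolding \<sigma>_def by auto
      ultimately have "\<beta> * (\<Sum>x\<in>UNIV. \<Sum>y\<in>UNIV. \<Phi> x y * f (Inl x) * f (Inr y)) \<le> 0"
        using bpos by (simp add: mult_nonneg_nonpos)
      then show ?thesis using Q[of f] unfolding f2 by simp
    qed
    have "0 \<le> \<beta> * D'" using False D'1 xi0 by simp
    then show False using g0 sg by simp
  qed
qed


lemma xi_value:
  fixes \<Phi> :: "'x::finite \<Rightarrow> 'y::finite \<Rightarrow> real"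
  assumes O: "dual_optimal \<Phi> lam"
  shows "xi_q \<Phi> = dual_obj lam"
proof -
  have F: "dual_feasible \<Phi> lam" using O dual_optimal_def by blast
  define BS where "BS = {quantum_bias \<Phi> dA dB \<psi> A B | dA dB \<psi> A B. quantum_strategy dA dB \<psi> A B}"
  have xi: "xi_q \<Phi> = Sup BS" unfolding xi_q_def BS_def ..
  have bdd: "\<And>b. b \<in> BS \<Longrightarrow> b \<le> dual_obj lam"
    unfolding BS_def using weak_duality[OF F] by blast
  have inBS: "(\<Sum>x\<in>UNIV. \<Sum>y\<in>UNIV. \<Phi> x y * (\<Sum>k<K. u x k * v y k)) \<in> BS"
    if u1: "\<And>x. (\<Sum>k<K. (u x k)^2) = 1" and v1: "\<And>y. (\<Sum>k<K. (v y k)^2) = 1" for K :: nat and u :: "'x \<Rightarrow> nat \<Rightarrow> real" and v :: "'y \<Rightarrow> nat \<Rightarrow> real"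
  proof -
    have c: "quantum_strategy (2^K) (2^K) (psi (2^K)) (\<lambda>x. gam K (u x)) (\<lambda>y. gam K (v y)) \<and>
      quantum_bias \<Phi> (2^K) (2^K) (psi (2^K)) (\<lambda>x. gam K (u x)) (\<lambda>y. gam K (v y))
        = (\<Sum>x\<in>UNIV. \<Sum>y\<in>UNIV. \<Phi> x y * (\<Sum>k<K. u x k * v y k))"
      by (rule clifford_strategy) (rule u1, rule v1)
    then show ?thesis unfolding BS_def mem_Collect_eq
      apply (rule_tac x="2^K" in exI, rule_tac x="2^K" in exI, rule_tac x="psi (2^K)" in exI,
          rule_tac x="\<lambda>x. gam K (u x)" in exI, rule_tac x="\<lambda>y. gam K (v y)" in exI)
      by simp
  qed
  have ne: "BS \<noteq> {}"
    using inBS[where K=1 and u="\<lambda>x k. 1" and v="\<lambda>y k. 1"] by auto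
  have ba: "bdd_above BS" using bdd by (auto simp: bdd_above_def)
  have "Sup BS \<le> dual_obj lam" using ne bdd by (rule cSup_least)
  moreover have "dual_obj lam \<le> Sup BS"
  proof (rule lower_bound[OF O])
    fix K and w :: "'x + 'y \<Rightarrow> nat \<Rightarrow> real"
    assume w: "\<And>i. (\<Sum>k<K. (w i k)^2) = 1"
    have "(\<Sum>x\<in>UNIV. \<Sum>y\<in>UNIV. \<Phi> x y * (\<Sum>k<K. w (Inl x) k * w (Inr y) k)) \<in> BS"
      by (rule inBS) (rule w)+
    then show "(\<Sum>x\<in>UNIV. \<Sum>y\<in>UNIV. \<Phi> x y * (\<Sum>k<K. w (Inl x) k * w (Inr y) k)) \<le> Sup BS"
      using ba by (rule cSup_upper)
  qed
  ultimately show ?thesis unfolding xi by simp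
qed


lemma sum_pairs_UNIV: "(\<Sum>p\<in>(UNIV :: ('a::finite \<times> 'b::finite) set). (case p of (y, y') \<Rightarrow> f y y')) = (\<Sum>y\<in>UNIV. \<Sum>y'\<in>UNIV. f y y')"
  by (simp add: sum.cartesian_product UNIV_Times_UNIV[symmetric] del: UNIV_Times_UNIV)

lemma cinner_minus: assumes A: "A \<in> carrier_mat n n" and B: "B \<in> carrier_mat n n" and v: "v \<in> carrier_vec n" and w: "w \<in> carrier_vec n"
  shows "cinner w ((A - B) *\<^sub>v v) = cinner w (A *\<^sub>v v) - cinner w (B *\<^sub>v v)"
proof -
  have AB: "A - B \<in> carrier_mat n n" using A B by (metis minus_carrier_mat)
  have "(\<Sum>i<n. \<Sum>j<n. cnj (w$i) * (A - B)$$(i,j) * v$j) = (\<Sum>i<n. \<Sum>j<n. cnj (w$i) * A$$(i,j) * v$j - cnj (w$i) * B$$(i,j) * v$j)"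
    using A B by (intro sum.cong refl) (simp add: algebra_simps)
  then show ?thesis unfolding cinner_mat[OF AB v w] cinner_mat[OF A v w] cinner_mat[OF B v w]
    by (simp add: sum_subtractf)
qed

lemma cinner_one: "v \<in> carrier_vec n \<Longrightarrow> w \<in> carrier_vec n \<Longrightarrow> cinner w (1\<^sub>m n *\<^sub>v v) = cinner w v"
  by simp

lemma herm_msum_real: assumes "\<And>s. s \<in> S \<Longrightarrow> herm_mat n (H s)"
  shows "herm_mat n (msum n S (\<lambda>s. complex_of_real (r s) \<cdot>\<^sub>m H s))"
  unfolding herm_mat_def
proof (intro conjI allI impI msum_carrier)
  fix i j assume i: "i < n" and j: "j < n"
  have "(\<Sum>s\<in>S. (complex_of_real (r s) \<cdot>\<^sub>m H s) $$ (i, j)) = (\<Sum>s\<in>S. cnj ((complex_of_real (r s) \<cdot>\<^sub>m H s) $$ (j, i)))"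
  proof (rule sum.cong[OF refl])
    fix s assume s: "s \<in> S"
    have h1: "H s $$ (i,j) = cnj (H s $$ (j,i))" using assms[OF s] i j unfolding herm_mat_def by blast
    have h2: "H s \<in> carrier_mat n n" using assms[OF s] unfolding herm_mat_def by blast
    note h1 h2
    then show "(complex_of_real (r s) \<cdot>\<^sub>m H s) $$ (i, j) = cnj ((complex_of_real (r s) \<cdot>\<^sub>m H s) $$ (j, i))"
      using i j by simp
  qed
  then show "msum n S (\<lambda>s. complex_of_real (r s) \<cdot>\<^sub>m H s) $$ (i, j) = cnj (msum n S (\<lambda>s. complex_of_real (r s) \<cdot>\<^sub>m H s) $$ (j, i))"
    using i j by simp
qed

lemma herm_pairs: assumes H: "\<And>y. herm_mat n (B y)" and sym: "\<And>y y'. c y y' = c y' y"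
  shows "herm_mat n (msum n (UNIV :: ('y::finite \<times> 'y) set) (\<lambda>(y, y'). complex_of_real (c y y') \<cdot>\<^sub>m (B y * B y')))"
  unfolding herm_mat_def
proof (intro conjI allI impI msum_carrier)
  fix i j assume i: "i < n" and j: "j < n"
  have BC: "B y \<in> carrier_mat n n" for y using H unfolding herm_mat_def by blast
  have BD: "dim_row (B y) = n" "dim_col (B y) = n" for y using BC[of y] by auto
  have Bh: "B y $$ (a,b) = cnj (B y $$ (b,a))" if "a < n" "b < n" for y a b using H that unfolding herm_mat_def by blast
  have prod: "(B y * B y') $$ (i,j) = cnj ((B y' * B y) $$ (j,i))" for y y'
  proof -
    have "(B y * B y') $$ (i,j) = (\<Sum>k<n. B y $$ (i,k) * B y' $$ (k,j))"
      using BC[of y] BC[of y'] i j by (simp add: scalar_prod_def atLeast0LessThan)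
    also have "\<dots> = (\<Sum>k<n. cnj (B y' $$ (j,k) * B y $$ (k,i)))"
      using i j by (intro sum.cong refl) (simp add: Bh[of i] Bh[of _ j] mult.commute)
    also have "\<dots> = cnj ((B y' * B y) $$ (j,i))"
      using BC[of y] BC[of y'] i j by (simp add: scalar_prod_def atLeast0LessThan)
    finally show ?thesis .
  qed
  have "msum n UNIV (\<lambda>(y, y'). complex_of_real (c y y') \<cdot>\<^sub>m (B y * B y')) $$ (i,j)
      = (\<Sum>y\<in>UNIV. \<Sum>y'\<in>UNIV. complex_of_real (c y y') * (B y * B y') $$ (i,j))"
    using i j BD by (simp add: sum_pairs_UNIV[symmetric] split_def)
  also have "\<dots> = (\<Sum>y\<in>UNIV. \<Sum>y'\<in>UNIV. cnj (complex_of_real (c y' y) * (B y' * B y) $$ (j,i)))"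
  proof (intro sum.cong refl)
    fix y y'
    show "complex_of_real (c y y') * (B y * B y') $$ (i,j) = cnj (complex_of_real (c y' y) * (B y' * B y) $$ (j,i))"
      unfolding prod[of y y'] sym[of y y'] by simp
  qed
  also have "\<dots> = (\<Sum>y'\<in>UNIV. \<Sum>y\<in>UNIV. cnj (complex_of_real (c y' y) * (B y' * B y) $$ (j,i)))"
    by (rule sum.swap)
  also have "\<dots> = cnj (msum n UNIV (\<lambda>(y, y'). complex_of_real (c y y') \<cdot>\<^sub>m (B y * B y')) $$ (j,i))"
    using i j BD by (simp add: sum_pairs_UNIV[symmetric] split_def)
  finally show "msum n UNIV (\<lambda>(y, y'). complex_of_real (c y y') \<cdot>\<^sub>m (B y * B y')) $$ (i,j) =
     cnj (msum n UNIV (\<lambda>(y, y'). complex_of_real (c y y') \<cdot>\<^sub>m (B y * B y')) $$ (j,i))" .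
qed


lemma quad_gram:
  fixes q :: "'y::finite \<Rightarrow> complex Matrix.vec" and a :: "'y \<Rightarrow> 'y \<Rightarrow> real"
  assumes q: "\<And>y. dim_vec (q y) = n"
  shows "(\<Sum>y\<in>UNIV. \<Sum>y'\<in>UNIV. a y y' * Re (cinner (q y) (q y'))) =
    (\<Sum>k<n. (\<Sum>y\<in>UNIV. \<Sum>y'\<in>UNIV. a y y' * (Re (q y $ k) * Re (q y' $ k)))
          + (\<Sum>y\<in>UNIV. \<Sum>y'\<in>UNIV. a y y' * (Im (q y $ k) * Im (q y' $ k))))"
proof -
  have "(\<Sum>y\<in>UNIV. \<Sum>y'\<in>UNIV. a y y' * Re (cinner (q y) (q y'))) =
     (\<Sum>y\<in>UNIV. \<Sum>y'\<in>UNIV. \<Sum>k<n. a y y' * (Re (q y $ k) * Re (q y' $ k)) + a y y' * (Im (q y $ k) * Im (q y' $ k)))"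
    unfolding Re_cinner[OF q] by (simp add: sum_distrib_left algebra_simps)
  also have "\<dots> = (\<Sum>k<n. \<Sum>y\<in>UNIV. \<Sum>y'\<in>UNIV. a y y' * (Re (q y $ k) * Re (q y' $ k)) + a y y' * (Im (q y $ k) * Im (q y' $ k)))"
    by (simp only: sum.swap[where B="{..<n}"])
  also have "\<dots> = (\<Sum>k<n. (\<Sum>y\<in>UNIV. \<Sum>y'\<in>UNIV. a y y' * (Re (q y $ k) * Re (q y' $ k)))
          + (\<Sum>y\<in>UNIV. \<Sum>y'\<in>UNIV. a y y' * (Im (q y $ k) * Im (q y' $ k))))"
    by (simp only: sum.distrib)
  finally show ?thesis .
qed

lemma G_eq:
  fixes \<Phi> :: "'x::finite \<Rightarrow> 'y::finite \<Rightarrow> real"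
  shows "(\<Sum>y\<in>UNIV. \<Sum>y'\<in>UNIV. (\<Sum>x\<in>UNIV. \<Phi> x y * \<Phi> x y' / l x) * (r y * r y')) =
    (\<Sum>x\<in>UNIV. (\<Sum>y\<in>UNIV. \<Phi> x y * r y)^2 / l x)"
proof -
  have "(\<Sum>y\<in>UNIV. \<Sum>y'\<in>UNIV. (\<Sum>x\<in>UNIV. \<Phi> x y * \<Phi> x y' / l x) * (r y * r y')) =
     (\<Sum>y\<in>UNIV. \<Sum>y'\<in>UNIV. \<Sum>x\<in>UNIV. (\<Phi> x y * r y) * (\<Phi> x y' * r y') / l x)"
  proof (intro sum.cong refl)
    fix y y'
    show "(\<Sum>x\<in>UNIV. \<Phi> x y * \<Phi> x y' / l x) * (r y * r y') = (\<Sum>x\<in>UNIV. (\<Phi> x y * r y) * (\<Phi> x y' * r y') / l x)"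
      unfolding sum_distrib_right by (rule sum.cong[OF refl]) (simp add: mult_ac)
  qed
  also have "\<dots> = (\<Sum>x\<in>UNIV. \<Sum>y\<in>UNIV. \<Sum>y'\<in>UNIV. (\<Phi> x y * r y) * (\<Phi> x y' * r y') / l x)"
    by (simp only: sum.swap[where A="UNIV::'y set" and B="UNIV::'x set"])
  also have "\<dots> = (\<Sum>x\<in>UNIV. (\<Sum>y\<in>UNIV. \<Phi> x y * r y)^2 / l x)"
    by (simp add: power2_eq_square sum_product sum_divide_distrib)
  finally show ?thesis .
qed

lemma cinner_inv: assumes H: "herm_mat n M" and MM: "M * M = 1\<^sub>m n" and v: "v \<in> carrier_vec n"
  shows "cinner (M *\<^sub>v v) (M *\<^sub>v v) = cinner v v"
proof -
  have Mc: "M \<in> carrier_mat n n" using H herm_mat_def by auto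
  have "cinner (M *\<^sub>v v) (M *\<^sub>v v) = cinner v (M *\<^sub>v (M *\<^sub>v v))"
    using cinner_herm[OF H, of "M *\<^sub>v v" v] Mc v by simp
  also have "M *\<^sub>v (M *\<^sub>v v) = v"
    using Mc v MM by (metis assoc_mult_mat_vec one_mult_mat_vec)
  finally show ?thesis .
qed

lemma herm_pop_form: assumes "herm_mat n M"
  shows "herm_mat n ((1/2 :: complex) \<cdot>\<^sub>m (complex_of_real \<xi> \<cdot>\<^sub>m 1\<^sub>m n - M))"
  unfolding herm_mat_def
proof (intro conjI allI impI)
  have Mc: "M \<in> carrier_mat n n" using assms herm_mat_def by auto
  show "(1/2 :: complex) \<cdot>\<^sub>m (complex_of_real \<xi> \<cdot>\<^sub>m 1\<^sub>m n - M) \<in> carrier_mat n n"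
    using Mc by (metis minus_carrier_mat smult_carrier_mat)
  fix i j assume i: "i < n" and j: "j < n"
  have "M $$ (i,j) = cnj (M $$ (j,i))" using assms i j unfolding herm_mat_def by blast
  then show "((1/2 :: complex) \<cdot>\<^sub>m (complex_of_real \<xi> \<cdot>\<^sub>m 1\<^sub>m n - M)) $$ (i, j) =
     cnj (((1/2 :: complex) \<cdot>\<^sub>m (complex_of_real \<xi> \<cdot>\<^sub>m 1\<^sub>m n - M)) $$ (j, i))"
    using i j Mc by auto
qed


lemma pop_psd:
  fixes \<Phi> :: "'x::finite \<Rightarrow> 'y::finite \<Rightarrow> real"
  assumes F: "dual_feasible \<Phi> lam" and pos: "\<And>x. 0 < lam (Inl x)"
    and xi: "\<xi> = (\<Sum>y\<in>UNIV. lam (Inr y))" and obs: "\<And>y. obs_mat n (B y)"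
  shows "psd_mat n (Pop \<Phi> lam \<xi> n B)"
proof -
  have hB: "herm_mat n (B y)" for y using obs unfolding obs_mat_def by blast
  have BC: "B y \<in> carrier_mat n n" for y using hB unfolding herm_mat_def by blast
  have BB: "B y * B y = 1\<^sub>m n" for y using obs unfolding obs_mat_def by blast
  define Mi where "Mi x = msum n (UNIV :: ('y \<times> 'y) set) (\<lambda>(y, y'). complex_of_real (\<Phi> x y * \<Phi> x y') \<cdot>\<^sub>m (B y * B y'))" for x
  define M where "M = msum n UNIV (\<lambda>x. complex_of_real (1 / lam (Inl x)) \<cdot>\<^sub>m Mi x)"
  have Pop: "Pop \<Phi> lam \<xi> n B = (1/2 :: complex) \<cdot>\<^sub>m (complex_of_real \<xi> \<cdot>\<^sub>m 1\<^sub>m n - M)"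
    unfolding Pop_def M_def Mi_def ..
  have hMi: "herm_mat n (Mi x)" for x unfolding Mi_def by (rule herm_pairs[OF hB]) simp
  have hM: "herm_mat n M" unfolding M_def by (rule herm_msum_real) (rule hMi)
  have MiC: "Mi x \<in> carrier_mat n n" for x unfolding Mi_def by simp
  have MC: "M \<in> carrier_mat n n" unfolding M_def by simp
  have hP: "herm_mat n (Pop \<Phi> lam \<xi> n B)" unfolding Pop by (rule herm_pop_form[OF hM])
  show ?thesis unfolding psd_mat_def
  proof (intro conjI ballI hP)
    fix v :: "complex Matrix.vec" assume v: "v \<in> carrier_vec n"
    show "Im (cinner v (Pop \<Phi> lam \<xi> n B *\<^sub>v v)) = 0" by (rule herm_cinner_real[OF hP v])
    define c where "c y = B y *\<^sub>v v" for y
    have cd: "dim_vec (c y) = n" for y unfolding c_def using BC[of y] by simp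
    have cc: "c y \<in> carrier_vec n" for y unfolding c_def using BC[of y] v by simp
    have BBv: "cinner v ((B y * B y') *\<^sub>v v) = cinner (c y) (c y')" for y y'
    proof -
      have "(B y * B y') *\<^sub>v v = B y *\<^sub>v c y'" unfolding c_def using BC[of y] BC[of y'] v by (metis assoc_mult_mat_vec)
      moreover have "cinner v (B y *\<^sub>v c y') = cinner (c y) (c y')"
        using cinner_herm[OF hB[of y] cc[of y'] v] by (simp add: c_def)
      ultimately show ?thesis by simp
    qed
    have cnorm: "Re (cinner (c y) (c y)) = Re (cinner v v)" for y
      unfolding c_def using cinner_inv[OF hB BB v] by simp
    have PC: "B y * B y' \<in> carrier_mat n n" for y y' using BC[of y] BC[of y'] by simp
    have Mform: "cinner v (M *\<^sub>v v) = (\<Sum>x\<in>UNIV. complex_of_real (1 / lam (Inl x)) *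
        (\<Sum>y\<in>UNIV. \<Sum>y'\<in>UNIV. complex_of_real (\<Phi> x y * \<Phi> x y') * cinner (c y) (c y')))"
    proof -
      have "cinner v (M *\<^sub>v v) = (\<Sum>x\<in>UNIV. cinner v ((complex_of_real (1 / lam (Inl x)) \<cdot>\<^sub>m Mi x) *\<^sub>v v))"
        unfolding M_def by (rule cinner_msum) (use MiC v in auto)
      also have "\<dots> = (\<Sum>x\<in>UNIV. complex_of_real (1 / lam (Inl x)) * cinner v (Mi x *\<^sub>v v))"
        by (intro sum.cong refl) (rule cinner_smult[OF MiC v v])
      also have "\<dots> = (\<Sum>x\<in>UNIV. complex_of_real (1 / lam (Inl x)) *
        (\<Sum>y\<in>UNIV. \<Sum>y'\<in>UNIV. complex_of_real (\<Phi> x y * \<Phi> x y') * cinner (c y) (c y')))"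
      proof (intro sum.cong refl arg_cong2[where f="(*)"])
        fix x
        have "cinner v (Mi x *\<^sub>v v) = (\<Sum>p\<in>UNIV. cinner v ((\<lambda>(y, y'). complex_of_real (\<Phi> x y * \<Phi> x y') \<cdot>\<^sub>m (B y * B y')) p *\<^sub>v v))"
          unfolding Mi_def by (rule cinner_msum) (use PC v in \<open>auto split: prod.splits\<close>)
        also have "\<dots> = (\<Sum>p\<in>UNIV. case p of (y, y') \<Rightarrow> complex_of_real (\<Phi> x y * \<Phi> x y') * cinner (c y) (c y'))"
        proof (rule sum.cong[OF refl])
          fix p :: "'y \<times> 'y"
          obtain y y' where p: "p = (y, y')" by fastforce
          show "cinner v ((\<lambda>(y, y'). complex_of_real (\<Phi> x y * \<Phi> x y') \<cdot>\<^sub>m (B y * B y')) p *\<^sub>v v) =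
            (case p of (y, y') \<Rightarrow> complex_of_real (\<Phi> x y * \<Phi> x y') * cinner (c y) (c y'))"
            unfolding p using cinner_smult[OF PC[of y y'] v v] BBv[of y y'] by simp
        qed
        also have "\<dots> = (\<Sum>y\<in>UNIV. \<Sum>y'\<in>UNIV. complex_of_real (\<Phi> x y * \<Phi> x y') * cinner (c y) (c y'))"
          by (rule sum_pairs_UNIV)
        finally show "cinner v (Mi x *\<^sub>v v) = (\<Sum>y\<in>UNIV. \<Sum>y'\<in>UNIV. complex_of_real (\<Phi> x y * \<Phi> x y') * cinner (c y) (c y'))" .
      qed
      finally show ?thesis .
    qed
    define a where "a y y' = (\<Sum>x\<in>UNIV. \<Phi> x y * \<Phi> x y' / lam (Inl x))" for y y'
    have ReM: "Re (cinner v (M *\<^sub>v v)) = (\<Sum>y\<in>UNIV. \<Sum>y'\<in>UNIV. a y y' * Re (cinner (c y) (c y')))"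
    proof -
      have "Re (cinner v (M *\<^sub>v v)) = (\<Sum>x\<in>UNIV. \<Sum>y\<in>UNIV. \<Sum>y'\<in>UNIV. \<Phi> x y * \<Phi> x y' / lam (Inl x) * Re (cinner (c y) (c y')))"
        unfolding Mform by (simp add: sum_distrib_left mult_ac)
      also have "\<dots> = (\<Sum>y\<in>UNIV. \<Sum>y'\<in>UNIV. \<Sum>x\<in>UNIV. \<Phi> x y * \<Phi> x y' / lam (Inl x) * Re (cinner (c y) (c y')))"
        by (simp only: sum.swap[where A="UNIV::'x set" and B="UNIV::'y set"])
      also have "\<dots> = (\<Sum>y\<in>UNIV. \<Sum>y'\<in>UNIV. a y y' * Re (cinner (c y) (c y')))"
        unfolding a_def by (simp add: sum_distrib_right)
      finally show ?thesis .
    qed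
    have bound: "(\<Sum>y\<in>UNIV. \<Sum>y'\<in>UNIV. a y y' * (r y * r y')) \<le> (\<Sum>y\<in>UNIV. lam (Inr y) * (r y)^2)" for r
      unfolding a_def G_eq using schur[OF F pos] .
    have "Re (cinner v (M *\<^sub>v v)) = (\<Sum>k<n. (\<Sum>y\<in>UNIV. \<Sum>y'\<in>UNIV. a y y' * (Re (c y $ k) * Re (c y' $ k)))
          + (\<Sum>y\<in>UNIV. \<Sum>y'\<in>UNIV. a y y' * (Im (c y $ k) * Im (c y' $ k))))"
      unfolding ReM by (rule quad_gram[OF cd])
    also have "\<dots> \<le> (\<Sum>k<n. (\<Sum>y\<in>UNIV. lam (Inr y) * (Re (c y $ k))^2) + (\<Sum>y\<in>UNIV. lam (Inr y) * (Im (c y $ k))^2))"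
      by (intro sum_mono add_mono bound)
    also have "\<dots> = (\<Sum>y\<in>UNIV. lam (Inr y) * Re (cinner (c y) (c y)))"
      unfolding Re_cinner[OF cd]
      by (simp add: sum_distrib_left sum.distrib[symmetric] sum.swap[where A="{..<n}"] power2_eq_square algebra_simps)
    also have "\<dots> = \<xi> * Re (cinner v v)" unfolding cnorm xi by (simp add: sum_distrib_right)
    finally have le: "Re (cinner v (M *\<^sub>v v)) \<le> \<xi> * Re (cinner v v)" .
    have "cinner v (Pop \<Phi> lam \<xi> n B *\<^sub>v v) = (1/2) * (complex_of_real \<xi> * cinner v v - cinner v (M *\<^sub>v v))"
    proof -
      have XC: "complex_of_real \<xi> \<cdot>\<^sub>m 1\<^sub>m n - M \<in> carrier_mat n n" using MC by (metis minus_carrier_mat)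
      have "cinner v (Pop \<Phi> lam \<xi> n B *\<^sub>v v) = (1/2) * cinner v ((complex_of_real \<xi> \<cdot>\<^sub>m 1\<^sub>m n - M) *\<^sub>v v)"
        unfolding Pop by (rule cinner_smult[OF XC v v])
      also have "cinner v ((complex_of_real \<xi> \<cdot>\<^sub>m 1\<^sub>m n - M) *\<^sub>v v) = cinner v ((complex_of_real \<xi> \<cdot>\<^sub>m 1\<^sub>m n) *\<^sub>v v) - cinner v (M *\<^sub>v v)"
        by (rule cinner_minus) (use MC v in auto)
      also have "cinner v ((complex_of_real \<xi> \<cdot>\<^sub>m 1\<^sub>m n) *\<^sub>v v) = complex_of_real \<xi> * cinner v v"
        using cinner_smult[of "1\<^sub>m n" n v v "complex_of_real \<xi>"] v by simp
      finally show ?thesis .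
    qed
    then have "Re (cinner v (Pop \<Phi> lam \<xi> n B *\<^sub>v v)) = Re ((1/2) * (complex_of_real \<xi> * cinner v v - cinner v (M *\<^sub>v v)))"
      by (rule arg_cong)
    also have "\<dots> = (\<xi> * Re (cinner v v) - Re (cinner v (M *\<^sub>v v))) / 2"
      by (simp add: Re_divide_numeral)
    finally have "Re (cinner v (Pop \<Phi> lam \<xi> n B *\<^sub>v v)) = (\<xi> * Re (cinner v v) - Re (cinner v (M *\<^sub>v v))) / 2" .
    then show "0 \<le> Re (cinner v (Pop \<Phi> lam \<xi> n B *\<^sub>v v))" using le by simp
  qed
qed


lemma mult_entry: "X \<in> carrier_mat n n \<Longrightarrow> Y \<in> carrier_mat n n \<Longrightarrow> i < n \<Longrightarrow> j < n \<Longrightarrow>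
  (X * Y) $$ (i,j) = (\<Sum>k<n. X $$ (i,k) * Y $$ (k,j))"
  by (simp add: scalar_prod_def atLeast0LessThan)

lemma D_sq_entry:
  fixes f :: "'y::finite \<Rightarrow> complex"
  assumes AC: "A \<in> carrier_mat n n" and BC: "\<And>y. B y \<in> carrier_mat n n"
    and i: "i < n" and j: "j < n"
  shows "((A - msum n UNIV (\<lambda>y. f y \<cdot>\<^sub>m B y)) * (A - msum n UNIV (\<lambda>y. f y \<cdot>\<^sub>m B y))) $$ (i,j)
    = (A * A) $$ (i,j) - (\<Sum>y\<in>UNIV. f y * (A * B y) $$ (i,j)) - (\<Sum>y\<in>UNIV. f y * (B y * A) $$ (i,j))
      + (\<Sum>y\<in>UNIV. \<Sum>y'\<in>UNIV. f y * f y' * (B y * B y') $$ (i,j))"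
proof -
  let ?C = "msum n UNIV (\<lambda>y. f y \<cdot>\<^sub>m B y)"
  have DC: "A - ?C \<in> carrier_mat n n" by (metis minus_carrier_mat msum_carrier)
  have Dent: "(A - ?C) $$ (k,l) = A $$ (k,l) - (\<Sum>y\<in>UNIV. f y * B y $$ (k,l))" if "k < n" "l < n" for k l
  proof -
    have BD: "dim_row (B y) = n" "dim_col (B y) = n" for y using BC[of y] by auto
    show ?thesis using that AC BD by simp
  qed
  have "((A - ?C) * (A - ?C)) $$ (i,j) = (\<Sum>k<n. (A - ?C) $$ (i,k) * (A - ?C) $$ (k,j))"
    by (rule mult_entry[OF DC DC i j])
  also have "\<dots> = (\<Sum>k<n. (A $$ (i,k) - (\<Sum>y\<in>UNIV. f y * B y $$ (i,k))) * (A $$ (k,j) - (\<Sum>y\<in>UNIV. f y * B y $$ (k,j))))"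
  proof (rule sum.cong[OF refl])
    fix k assume "k \<in> {..<n}"
    then have k: "k < n" by simp
    show "(A - ?C) $$ (i,k) * (A - ?C) $$ (k,j) = (A $$ (i,k) - (\<Sum>y\<in>UNIV. f y * B y $$ (i,k))) * (A $$ (k,j) - (\<Sum>y\<in>UNIV. f y * B y $$ (k,j)))"
      by (simp only: Dent[OF i k] Dent[OF k j])
  qed
  also have "\<dots> = (\<Sum>k<n. A $$ (i,k) * A $$ (k,j)) - (\<Sum>k<n. A $$ (i,k) * (\<Sum>y\<in>UNIV. f y * B y $$ (k,j)))
      - (\<Sum>k<n. (\<Sum>y\<in>UNIV. f y * B y $$ (i,k)) * A $$ (k,j)) + (\<Sum>k<n. (\<Sum>y\<in>UNIV. f y * B y $$ (i,k)) * (\<Sum>y\<in>UNIV. f y * B y $$ (k,j)))"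
    by (simp add: sum_subtractf[symmetric] sum.distrib[symmetric] algebra_simps)
  also have "(\<Sum>k<n. A $$ (i,k) * A $$ (k,j)) = (A * A) $$ (i,j)" by (rule mult_entry[OF AC AC i j, symmetric])
  also have "(\<Sum>k<n. A $$ (i,k) * (\<Sum>y\<in>UNIV. f y * B y $$ (k,j))) = (\<Sum>y\<in>UNIV. f y * (A * B y) $$ (i,j))"
  proof -
    have "(\<Sum>k<n. A $$ (i,k) * (\<Sum>y\<in>UNIV. f y * B y $$ (k,j))) = (\<Sum>k<n. \<Sum>y\<in>UNIV. f y * (A $$ (i,k) * B y $$ (k,j)))"
      by (simp add: sum_distrib_left mult_ac)
    also have "\<dots> = (\<Sum>y\<in>UNIV. \<Sum>k<n. f y * (A $$ (i,k) * B y $$ (k,j)))" by (rule sum.swap)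
    also have "\<dots> = (\<Sum>y\<in>UNIV. f y * (A * B y) $$ (i,j))"
      by (intro sum.cong refl) (simp add: mult_entry[OF AC BC i j] sum_distrib_left)
    finally show ?thesis .
  qed
  also have "(\<Sum>k<n. (\<Sum>y\<in>UNIV. f y * B y $$ (i,k)) * A $$ (k,j)) = (\<Sum>y\<in>UNIV. f y * (B y * A) $$ (i,j))"
  proof -
    have "(\<Sum>k<n. (\<Sum>y\<in>UNIV. f y * B y $$ (i,k)) * A $$ (k,j)) = (\<Sum>k<n. \<Sum>y\<in>UNIV. f y * (B y $$ (i,k) * A $$ (k,j)))"
      by (intro sum.cong refl) (simp add: sum_distrib_right sum_distrib_left mult_ac)
    also have "\<dots> = (\<Sum>y\<in>UNIV. \<Sum>k<n. f y * (B y $$ (i,k) * A $$ (k,j)))" by (rule sum.swap)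
    also have "\<dots> = (\<Sum>y\<in>UNIV. f y * (B y * A) $$ (i,j))"
      by (intro sum.cong refl) (simp add: mult_entry[OF BC AC i j] sum_distrib_left)
    finally show ?thesis .
  qed
  also have "(\<Sum>k<n. (\<Sum>y\<in>UNIV. f y * B y $$ (i,k)) * (\<Sum>y\<in>UNIV. f y * B y $$ (k,j))) =
     (\<Sum>y\<in>UNIV. \<Sum>y'\<in>UNIV. f y * f y' * (B y * B y') $$ (i,j))"
  proof -
    have "(\<Sum>k<n. (\<Sum>y\<in>UNIV. f y * B y $$ (i,k)) * (\<Sum>y\<in>UNIV. f y * B y $$ (k,j))) =
       (\<Sum>k<n. \<Sum>y\<in>UNIV. \<Sum>y'\<in>UNIV. f y * f y' * (B y $$ (i,k) * B y' $$ (k,j)))"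
      by (intro sum.cong refl) (subst sum_product, intro sum.cong refl, simp add: mult_ac)
    also have "\<dots> = (\<Sum>y\<in>UNIV. \<Sum>y'\<in>UNIV. \<Sum>k<n. f y * f y' * (B y $$ (i,k) * B y' $$ (k,j)))"
      by (simp only: sum.swap[where A="{..<n}"])
    also have "\<dots> = (\<Sum>y\<in>UNIV. \<Sum>y'\<in>UNIV. f y * f y' * (B y * B y') $$ (i,j))"
      by (intro sum.cong refl) (simp add: mult_entry[OF BC BC i j] sum_distrib_left)
    finally show ?thesis .
  qed
  finally show ?thesis .
qed


lemma identity_gen:
  fixes \<Phi> :: "'x::finite \<Rightarrow> 'y::finite \<Rightarrow> real" and Ah :: "'x \<Rightarrow> complex mat" and Bh :: "'y \<Rightarrow> complex mat"
  assumes AC: "\<And>x. Ah x \<in> carrier_mat n n" and BC: "\<And>y. Bh y \<in> carrier_mat n n"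
    and AA: "\<And>x. Ah x * Ah x = 1\<^sub>m n" and comm: "\<And>x y. Ah x * Bh y = Bh y * Ah x"
    and pos: "\<And>x. 0 < lam (Inl x)" and xi: "\<xi> = (\<Sum>x\<in>UNIV. lam (Inl x))"
  shows "complex_of_real \<xi> \<cdot>\<^sub>m 1\<^sub>m n - game_op \<Phi> n Ah Bh
    = msum n UNIV (\<lambda>x. complex_of_real (lam (Inl x) / 2) \<cdot>\<^sub>m
        ((Ah x - msum n UNIV (\<lambda>y. complex_of_real (\<Phi> x y / lam (Inl x)) \<cdot>\<^sub>m Bh y))
       * (Ah x - msum n UNIV (\<lambda>y. complex_of_real (\<Phi> x y / lam (Inl x)) \<cdot>\<^sub>m Bh y))))
      + Pop \<Phi> lam \<xi> n Bh"
  (is "?L = ?S + ?P")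
proof -
  define D where "D x = Ah x - msum n UNIV (\<lambda>y. complex_of_real (\<Phi> x y / lam (Inl x)) \<cdot>\<^sub>m Bh y)" for x
  have DC: "D x \<in> carrier_mat n n" for x unfolding D_def by (metis minus_carrier_mat msum_carrier)
  have DDC: "D x * D x \<in> carrier_mat n n" for x using DC[of x] by simp
  have ABC: "Ah x * Bh y \<in> carrier_mat n n" for x y using AC[of x] BC[of y] by simp
  have BBC: "Bh y * Bh y' \<in> carrier_mat n n" for y y' using BC[of y] BC[of y'] by simp
  have AD: "dim_row (Ah x) = n" "dim_col (Ah x) = n" for x using AC[of x] by auto
  have BD: "dim_row (Bh y) = n" "dim_col (Bh y) = n" for y using BC[of y] by auto
  have lnz: "complex_of_real (lam (Inl x)) \<noteq> 0" for x using pos[of x] by simp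
  define Mi where "Mi x = msum n (UNIV :: ('y \<times> 'y) set) (\<lambda>(y, y'). complex_of_real (\<Phi> x y * \<Phi> x y') \<cdot>\<^sub>m (Bh y * Bh y'))" for x
  define M where "M = msum n UNIV (\<lambda>x. complex_of_real (1 / lam (Inl x)) \<cdot>\<^sub>m Mi x)"
  have Pop: "Pop \<Phi> lam \<xi> n Bh = (1/2 :: complex) \<cdot>\<^sub>m (complex_of_real \<xi> \<cdot>\<^sub>m 1\<^sub>m n - M)"
    unfolding Pop_def M_def Mi_def ..
  have MC: "M \<in> carrier_mat n n" unfolding M_def by simp
  show ?thesis
  proof (rule eq_matI)
    show "dim_row ?L = dim_row (?S + ?P)" "dim_col ?L = dim_col (?S + ?P)"
      unfolding game_op_def Pop_def by simp_all
    fix i j assume "i < dim_row (?S + ?P)" "j < dim_col (?S + ?P)"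
    then have i: "i < n" and j: "j < n" by (simp_all add: Pop_def)
    define \<delta> :: complex where "\<delta> = (1\<^sub>m n :: complex mat) $$ (i,j)"
    define Pxy where "Pxy x y = (Ah x * Bh y) $$ (i,j)" for x y
    define Q where "Q y y' = (Bh y * Bh y') $$ (i,j)" for y y'
    have Lent: "?L $$ (i,j) = complex_of_real \<xi> * \<delta> - (\<Sum>x\<in>UNIV. \<Sum>y\<in>UNIV. complex_of_real (\<Phi> x y) * Pxy x y)"
    proof -
      have "game_op \<Phi> n Ah Bh $$ (i,j) = (\<Sum>p\<in>UNIV. (case p of (x, y) \<Rightarrow> complex_of_real (\<Phi> x y) \<cdot>\<^sub>m (Ah x * Bh y)) $$ (i,j))"
        unfolding game_op_def using i j by simp
      also have "\<dots> = (\<Sum>p\<in>UNIV. case p of (x, y) \<Rightarrow> complex_of_real (\<Phi> x y) * Pxy x y)"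
        by (rule sum.cong[OF refl]) (use i j AD BD in \<open>auto simp: Pxy_def split: prod.splits\<close>)
      also have "\<dots> = (\<Sum>x\<in>UNIV. \<Sum>y\<in>UNIV. complex_of_real (\<Phi> x y) * Pxy x y)" by (rule sum_pairs_UNIV)
      finally have g: "game_op \<Phi> n Ah Bh $$ (i,j) = (\<Sum>x\<in>UNIV. \<Sum>y\<in>UNIV. complex_of_real (\<Phi> x y) * Pxy x y)" .
      have GC: "game_op \<Phi> n Ah Bh \<in> carrier_mat n n" unfolding game_op_def by simp
      have "?L $$ (i,j) = complex_of_real \<xi> * \<delta> - game_op \<Phi> n Ah Bh $$ (i,j)"
        unfolding \<delta>_def using i j GC by simp
      then show ?thesis unfolding g .
    qed
    have DDent: "complex_of_real (lam (Inl x) / 2) * (D x * D x) $$ (i,j) =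
        complex_of_real (lam (Inl x) / 2) * \<delta> - (\<Sum>y\<in>UNIV. complex_of_real (\<Phi> x y) * Pxy x y)
        + (1/2) * (complex_of_real (1 / lam (Inl x)) * (\<Sum>y\<in>UNIV. \<Sum>y'\<in>UNIV. complex_of_real (\<Phi> x y * \<Phi> x y') * Q y y'))" for x
    proof -
      let ?f = "\<lambda>y. complex_of_real (\<Phi> x y / lam (Inl x))"
      have "(D x * D x) $$ (i,j) = (Ah x * Ah x) $$ (i,j) - (\<Sum>y\<in>UNIV. ?f y * (Ah x * Bh y) $$ (i,j))
          - (\<Sum>y\<in>UNIV. ?f y * (Bh y * Ah x) $$ (i,j)) + (\<Sum>y\<in>UNIV. \<Sum>y'\<in>UNIV. ?f y * ?f y' * (Bh y * Bh y') $$ (i,j))"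
        unfolding D_def by (rule D_sq_entry[OF AC BC i j])
      also have "\<dots> = \<delta> - 2 * (\<Sum>y\<in>UNIV. ?f y * Pxy x y) + (\<Sum>y\<in>UNIV. \<Sum>y'\<in>UNIV. ?f y * ?f y' * Q y y')"
        unfolding AA \<delta>_def Pxy_def Q_def comm by simp
      finally have e: "(D x * D x) $$ (i,j) = \<delta> - 2 * (\<Sum>y\<in>UNIV. ?f y * Pxy x y) + (\<Sum>y\<in>UNIV. \<Sum>y'\<in>UNIV. ?f y * ?f y' * Q y y')" .
      have e1: "complex_of_real (lam (Inl x) / 2) * (2 * (\<Sum>y\<in>UNIV. ?f y * Pxy x y)) = (\<Sum>y\<in>UNIV. complex_of_real (\<Phi> x y) * Pxy x y)"
        unfolding sum_distrib_left by (intro sum.cong refl) (use lnz[of x] in \<open>simp add: field_simps\<close>)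
      have e2: "complex_of_real (lam (Inl x) / 2) * (\<Sum>y\<in>UNIV. \<Sum>y'\<in>UNIV. ?f y * ?f y' * Q y y') =
          (1/2) * (complex_of_real (1 / lam (Inl x)) * (\<Sum>y\<in>UNIV. \<Sum>y'\<in>UNIV. complex_of_real (\<Phi> x y * \<Phi> x y') * Q y y'))"
        unfolding sum_distrib_left by (intro sum.cong refl) (use lnz[of x] in \<open>simp add: field_simps\<close>)
      show ?thesis unfolding e using e1 e2 by (simp add: algebra_simps)
    qed
    have Sent: "?S $$ (i,j) = (\<Sum>x\<in>UNIV. complex_of_real (lam (Inl x) / 2) * (D x * D x) $$ (i,j))"
    proof -
      have DDdim: "dim_row (D x * D x) = n" "dim_col (D x * D x) = n" for x using DDC[of x] by auto
      show ?thesis unfolding D_def[symmetric] using i j DDdim by simp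
    qed
    have Pent: "?P $$ (i,j) = (1/2) * (complex_of_real \<xi> * \<delta> - (\<Sum>x\<in>UNIV. complex_of_real (1 / lam (Inl x)) *
        (\<Sum>y\<in>UNIV. \<Sum>y'\<in>UNIV. complex_of_real (\<Phi> x y * \<Phi> x y') * Q y y')))"
    proof -
      have Mient: "Mi x $$ (i,j) = (\<Sum>y\<in>UNIV. \<Sum>y'\<in>UNIV. complex_of_real (\<Phi> x y * \<Phi> x y') * Q y y')" for x
      proof -
        have "Mi x $$ (i,j) = (\<Sum>p\<in>UNIV. (case p of (y, y') \<Rightarrow> complex_of_real (\<Phi> x y * \<Phi> x y') \<cdot>\<^sub>m (Bh y * Bh y')) $$ (i,j))"
          unfolding Mi_def using i j by simp
        also have "\<dots> = (\<Sum>p\<in>UNIV. case p of (y, y') \<Rightarrow> complex_of_real (\<Phi> x y * \<Phi> x y') * Q y y')"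
          by (rule sum.cong[OF refl]) (use i j BD in \<open>auto simp: Q_def split: prod.splits\<close>)
        also have "\<dots> = (\<Sum>y\<in>UNIV. \<Sum>y'\<in>UNIV. complex_of_real (\<Phi> x y * \<Phi> x y') * Q y y')" by (rule sum_pairs_UNIV)
        finally show ?thesis .
      qed
      have "M $$ (i,j) = (\<Sum>x\<in>UNIV. complex_of_real (1 / lam (Inl x)) * Mi x $$ (i,j))"
        unfolding M_def using i j by (simp add: Mi_def)
      then show ?thesis unfolding Pop \<delta>_def using i j MC Mient by simp
    qed
    have "(?S + ?P) $$ (i,j) = ?S $$ (i,j) + ?P $$ (i,j)" using i j by (simp add: Pop_def)
    also have "\<dots> = complex_of_real \<xi> * \<delta> - (\<Sum>x\<in>UNIV. \<Sum>y\<in>UNIV. complex_of_real (\<Phi> x y) * Pxy x y)"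
    proof -
      have xi2: "(\<Sum>x\<in>UNIV. complex_of_real (lam (Inl x) / 2) * \<delta>) = complex_of_real \<xi> / 2 * \<delta>"
        unfolding xi by (simp add: sum_distrib_right sum_divide_distrib)
      show ?thesis unfolding Sent Pent DDent sum.distrib sum_subtractf xi2
        by (simp add: sum_distrib_left algebra_simps)
    qed
    finally show "?L $$ (i,j) = (?S + ?P) $$ (i,j)" unfolding Lent by simp
  qed
qed


theorem mainTheorem1:
  fixes q :: "'x::finite \<times> 'y::finite \<Rightarrow> real"
    and f :: "'x \<Rightarrow> 'y \<Rightarrow> bool"
    and \<Phi> :: "'x \<Rightarrow> 'y \<Rightarrow> real"
    and lam :: "'x + 'y \<Rightarrow> real"
    and \<xi> :: real
  assumes "xor_distribution q"
    and "\<Phi> = game_matrix q f"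
    and "\<xi> = xi_q \<Phi>"
    and "dual_optimal \<Phi> lam"
    and "\<forall>x. 0 < lam (Inl x)"
  shows "(\<forall>(dA::nat) (dB::nat) (A :: 'x \<Rightarrow> complex mat) (B :: 'y \<Rightarrow> complex mat).
            (\<forall>x. obs_mat dA (A x)) \<and> (\<forall>y. obs_mat dB (B y)) \<longrightarrow>
            of_real \<xi> \<cdot>\<^sub>m 1\<^sub>m (dA * dB)
              - game_op \<Phi> (dA * dB) (\<lambda>x. lift_A dA dB (A x)) (\<lambda>y. lift_B dA dB (B y))
            = msum (dA * dB) UNIV (\<lambda>x. of_real (lam (Inl x) / 2) \<cdot>\<^sub>m
                  ((lift_A dA dB (A x) - msum (dA * dB) UNIV
                      (\<lambda>y. of_real (\<Phi> x y / lam (Inl x)) \<cdot>\<^sub>m lift_B dA dB (B y)))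
                 * (lift_A dA dB (A x) - msum (dA * dB) UNIV
                      (\<lambda>y. of_real (\<Phi> x y / lam (Inl x)) \<cdot>\<^sub>m lift_B dA dB (B y)))))
              + Pop \<Phi> lam \<xi> (dA * dB) (\<lambda>y. lift_B dA dB (B y)))
       \<and> (\<forall>(n::nat) (B :: 'y \<Rightarrow> complex mat).
            (\<forall>y. obs_mat n (B y)) \<longrightarrow> psd_mat n (Pop \<Phi> lam \<xi> n B))"
proof -
  have O: "dual_optimal \<Phi> lam" using assms(4) .
  have pos: "\<And>x. 0 < lam (Inl x)" using assms(5) by blast
  have F: "dual_feasible \<Phi> lam" using O dual_optimal_def by blast
  have xv: "\<xi> = dual_obj lam" using assms(3) xi_value[OF O] by simp
  have bal: "(\<Sum>x\<in>UNIV. lam (Inl x)) = (\<Sum>y\<in>UNIV. lam (Inr y))" by (rule balance[OF O pos])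
  have xiA: "\<xi> = (\<Sum>x\<in>UNIV. lam (Inl x))" using xv bal unfolding dual_obj_split by simp
  have xiB: "\<xi> = (\<Sum>y\<in>UNIV. lam (Inr y))" using xiA bal by simp
  show ?thesis
  proof (intro conjI allI impI)
    fix dA dB :: nat and A :: "'x \<Rightarrow> complex mat" and B :: "'y \<Rightarrow> complex mat"
    assume ob: "(\<forall>x. obs_mat dA (A x)) \<and> (\<forall>y. obs_mat dB (B y))"
    have cA: "A x \<in> carrier_mat dA dA" for x using ob unfolding obs_mat_def herm_mat_def by blast
    have cB: "B y \<in> carrier_mat dB dB" for y using ob unfolding obs_mat_def herm_mat_def by blast
    have AA: "A x * A x = 1\<^sub>m dA" for x using ob unfolding obs_mat_def by blast
    show "complex_of_real \<xi> \<cdot>\<^sub>m 1\<^sub>m (dA * dB) - game_op \<Phi> (dA * dB) (\<lambda>x. lift_A dA dB (A x)) (\<lambda>y. lift_B dA dB (B y)) =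
      msum (dA * dB) UNIV (\<lambda>x. complex_of_real (lam (Inl x) / 2) \<cdot>\<^sub>m
        ((lift_A dA dB (A x) - msum (dA * dB) UNIV (\<lambda>y. complex_of_real (\<Phi> x y / lam (Inl x)) \<cdot>\<^sub>m lift_B dA dB (B y))) *
         (lift_A dA dB (A x) - msum (dA * dB) UNIV (\<lambda>y. complex_of_real (\<Phi> x y / lam (Inl x)) \<cdot>\<^sub>m lift_B dA dB (B y))))) +
      Pop \<Phi> lam \<xi> (dA * dB) (\<lambda>y. lift_B dA dB (B y))"
    proof (rule identity_gen[where Ah="\<lambda>x. lift_A dA dB (A x)" and Bh="\<lambda>y. lift_B dA dB (B y)"])
      show "\<And>x. lift_A dA dB (A x) \<in> carrier_mat (dA*dB) (dA*dB)" using cA by (rule lift_A_carrier)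
      show "\<And>y. lift_B dA dB (B y) \<in> carrier_mat (dA*dB) (dA*dB)" using cB by (rule lift_B_carrier)
      show "\<And>x. lift_A dA dB (A x) * lift_A dA dB (A x) = 1\<^sub>m (dA*dB)" using cA AA by (rule lift_AA)
      show "\<And>x y. lift_A dA dB (A x) * lift_B dA dB (B y) = lift_B dA dB (B y) * lift_A dA dB (A x)"
        using cA cB by (simp add: lift_AB lift_BA)
      show "\<And>x. 0 < lam (Inl x)" by (rule pos)
      show "\<xi> = (\<Sum>x\<in>UNIV. lam (Inl x))" by (rule xiA)
    qed
  next
    fix n :: nat and B :: "'y \<Rightarrow> complex mat"
    assume "\<forall>y. obs_mat n (B y)"
    then show "psd_mat n (Pop \<Phi> lam \<xi> n B)" using pop_psd[OF F pos xiB] by blast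
  qed
qed


end
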